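(* The map $\Phi$ is a bijection from $\mathcal{N}_{n,1}$ onto $\mathcal{M}_{n,1}$.
   Context: An alternating sign matrix (ASM) of order $n$ is an $n\times n$ matrix $A=(a_{ij})$ with entries in $\{-1,0,1\}$ such that in every row and every column the nonzero entries alternate in sign, the first and the last nonzero entries being $1$. $\mathcal{A}_{n,1}$ denotes the set of order-$n$ ASMs having exactly one entry equal to $-1$. Let $A\in\mathcal{A}_{n,1}$. The opening column is the column containing the unique $-1$; the closing row is the row containing the $-1$; the opening row is the row of the $1$ of the opening column lying above the $-1$. The columns strictly to the left (resp. right) of the opening column form the left side (resp. right side). The closing row contains exactly two $1$'s, one in each side; the one in the right side is the closing $1$ and its column is the closing column. $A$ is neutral if the closing row is the row immediately below the opening row; $\mathcal{A}_{n,1}^{0}$ denotes the set of neutral elements of $\mathcal{A}_{n,1}$. For $N\in\mathcal{A}_{n,1}^{0}$: the leading $1$ is the highest $1$ in the left side strictly below the opening row; its column is the leading column; the leading cell consists of the entries strictly below the opening row and strictly between the leading column and the opening column, and $\ell(N)$ is the sum of its entries. The closing cell consists of the entries strictly below the closing row and strictly between the opening column and the closing column, and $c(N)$ is the sum of its entries. $\mathcal{N}_{n,1}=\{(N,E)\,:\,N\in\mathcal{A}_{n,1}^{0},\ E\in\mathbb{Z},\ -\ell(N)\le E\le c(N)\}$. Generalized inversion table: for $(N,E)\in\mathcal{N}_{n,1}$, let $n+1-k$ be the index of the opening row of $N$ (so the closing row is row $n+2-k$). For $1\le i\le n$, $a_i$ is the sum of the entries of $N$ lying strictly below row $n+1-i$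 and strictly to the left of the unique $1$ of row $n+1-i$ (for $i=k-1$, i.e. the closing row, the leftmost $1$ of that row is used). Let $b=c(N)$ and $\beta=E+\ell(N)$. The generalized inversion table of $(N,E)$ is $(k;a_1,\dots,a_n;b,\beta)$. Mixed configurations: let $\mathcal{G}_n=\{(x,y)\in\mathbb{Z}^2: 0\le x<y\le n\}$. Steps are $E=(1,0)$, $F=(1,0)$ (a distinct letter from $E$ with the same displacement), $S=(0,-1)$, $N=(1,1)$. A mixed path is a lattice path all of whose vertices lie in $\mathcal{G}_n$, given as a word $LR$ where the Left part $L$ is a word in $\{S,E\}$ and the Right part $R$ is a word in $\{F,N\}$; the vertex where $L$ ends and $R$ begins is the junction. An order-$n$ mixed configuration is a sequence $(\omega_1,\dots,\omega_n)$ of mixed paths such that for some permutation $\sigma$ of $\{1,\dots,n\}$, $\omega_i$ starts at $(0,i)$ and ends at $(\sigma(i)-1,\sigma(i))$, the Left parts are pairwise vertex-disjoint, and the Right parts are pairwise vertex-disjoint. $\mathcal{M}_{n,s}$ is the set of order-$n$ mixed configurations containing exactly $s$ $N$-steps in total. For $(N,E)\in\mathcal{N}_{n,1}$ with generalized inversion table $(k;a_1,\dots,a_n;b,\beta)$, $\Phi(N,E)=(\omega_1,\dots,\omega_n)$ where $\omega_i=E^{a_i}F^{i-1-a_i}$ for $i\notin\{k-1,k\}$, $\omega_{k-1}=E^{a_{k-1}}F^{\beta}NF^{k-2-a_{k-1}-\beta}$, and $\omega_k=E^{a_k}SE^{b}F^{k-2-a_k-b}$ (exponents denote repetition of steps;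 $\omega_i$ starts at $(0,i)$). *)

theory Defs
  imports Main
begin

text \<open>An order-n matrix is represented as a function nat => nat => int, rows and
columns indexed by 1..n (row 1 is the top row, column 1 the leftmost), with all
entries outside {1..n} x {1..n} equal to 0.\<close>

type_synonym mat = "nat \<Rightarrow> nat \<Rightarrow> int"

definition nz_row :: "nat \<Rightarrow> mat \<Rightarrow> nat \<Rightarrow> int list" where
  "nz_row n A i = filter (\<lambda>x. x \<noteq> 0) (map (\<lambda>j. A i j) [1..<n+1])"

definition nz_col :: "nat \<Rightarrow> mat \<Rightarrow> nat \<Rightarrow> int list" where
  "nz_col n A j = filter (\<lambda>x. x \<noteq> 0) (map (\<lambda>i. A i j) [1..<n+1])"

definition alternating :: "int list \<Rightarrow> bool" where
  "alternating xs \<longleftrightarrow> xs \<noteq> [] \<and> hd xs = 1 \<and> last xs = 1 \<and>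
     (\<forall>k. Suc k < length xs \<longrightarrow> xs ! Suc k = - (xs ! k))"

definition is_ASM :: "nat \<Rightarrow> mat \<Rightarrow> bool" where
  "is_ASM n A \<longleftrightarrow>
     (\<forall>i j. A i j \<noteq> 0 \<longrightarrow> i \<in> {1..n} \<and> j \<in> {1..n}) \<and>
     (\<forall>i j. A i j \<in> {-1, 0, 1}) \<and>
     (\<forall>i\<in>{1..n}. alternating (nz_row n A i)) \<and>
     (\<forall>j\<in>{1..n}. alternating (nz_col n A j))"

definition ASM1 :: "nat \<Rightarrow> mat set" where
  "ASM1 n = {A. is_ASM n A \<and> card {(i, j). i \<in> {1..n} \<and> j \<in> {1..n} \<and> A i j = -1} = 1}"

definition closing_row :: "mat \<Rightarrow> nat" where
  "closing_row A = fst (THE p. A (fst p) (snd p) = -1)"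

definition opening_col :: "mat \<Rightarrow> nat" where
  "opening_col A = snd (THE p. A (fst p) (snd p) = -1)"

definition opening_row :: "mat \<Rightarrow> nat" where
  "opening_row A = (THE i. i < closing_row A \<and> A i (opening_col A) = 1)"

definition closing_col :: "mat \<Rightarrow> nat" where
  "closing_col A = (THE j. opening_col A < j \<and> A (closing_row A) j = 1)"

definition neutral :: "mat \<Rightarrow> bool" where
  "neutral A \<longleftrightarrow> closing_row A = opening_row A + 1"

definition leading_row :: "mat \<Rightarrow> nat" where
  "leading_row A = (LEAST i. opening_row A < i \<and> (\<exists>j. j < opening_col A \<and> A i j = 1))"

definition leading_col :: "mat \<Rightarrow> nat" where
  "leading_col A = (THE j. j < opening_col A \<and> A (leading_row A) j = 1)"

definition ell :: "nat \<Rightarrow> mat \<Rightarrow> int" where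
  "ell n A = (\<Sum>i\<in>{opening_row A<..n}. \<Sum>j\<in>{leading_col A<..<opening_col A}. A i j)"

definition cval :: "nat \<Rightarrow> mat \<Rightarrow> int" where
  "cval n A = (\<Sum>i\<in>{closing_row A<..n}. \<Sum>j\<in>{opening_col A<..<closing_col A}. A i j)"

definition NN1 :: "nat \<Rightarrow> (mat \<times> int) set" where
  "NN1 n = {(A, E). A \<in> ASM1 n \<and> neutral A \<and> - ell n A \<le> E \<and> E \<le> cval n A}"

definition kidx :: "nat \<Rightarrow> mat \<Rightarrow> nat" where
  "kidx n A = n + 1 - opening_row A"

text \<open>Leftmost 1 of a row (the unique 1 for rows other than the closing row).\<close>
definition leftmost1 :: "mat \<Rightarrow> nat \<Rightarrow> nat" where
  "leftmost1 A r = (LEAST j. A r j = 1)"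

definition ainv :: "nat \<Rightarrow> mat \<Rightarrow> nat \<Rightarrow> int" where
  "ainv n A i = (\<Sum>r\<in>{n+1-i<..n}. \<Sum>j\<in>{1..<leftmost1 A (n+1-i)}. A r j)"

datatype step = StepE | StepF | StepS | StepN

fun disp :: "step \<Rightarrow> int \<times> int" where
  "disp StepE = (1, 0)"
| "disp StepF = (1, 0)"
| "disp StepS = (0, -1)"
| "disp StepN = (1, 1)"

fun verts :: "int \<times> int \<Rightarrow> step list \<Rightarrow> (int \<times> int) list" where
  "verts p [] = [p]"
| "verts p (s # w) = p # verts (fst p + fst (disp s), snd p + snd (disp s)) w"

definition grid :: "nat \<Rightarrow> (int \<times> int) set" where
  "grid n = {(x, y). 0 \<le> x \<and> x < y \<and> y \<le> int n}"

definition left_part :: "step list \<Rightarrow> step list" where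
  "left_part w = takeWhile (\<lambda>s. s \<in> {StepS, StepE}) w"

definition right_part :: "step list \<Rightarrow> step list" where
  "right_part w = dropWhile (\<lambda>s. s \<in> {StepS, StepE}) w"

definition mixed_path :: "nat \<Rightarrow> int \<times> int \<Rightarrow> step list \<Rightarrow> bool" where
  "mixed_path n p w \<longleftrightarrow> set (verts p w) \<subseteq> grid n \<and>
     (\<exists>L R. w = L @ R \<and> set L \<subseteq> {StepS, StepE} \<and> set R \<subseteq> {StepF, StepN})"

text \<open>Vertices of the Left part and of the Right part (both contain the junction).\<close>
definition left_verts :: "int \<times> int \<Rightarrow> step list \<Rightarrow> (int \<times> int) set" where
  "left_verts p w = set (verts p (left_part w))"

definition right_verts :: "int \<times> int \<Rightarrow> step list \<Rightarrow> (int \<times> int) set" where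
  "right_verts p w = set (verts (last (verts p (left_part w))) (right_part w))"

text \<open>A configuration (omega_1,...,omega_n) is the list ws with omega_i = ws ! (i-1),
the path omega_i starting at (0,i).\<close>
definition mixed_config :: "nat \<Rightarrow> step list list \<Rightarrow> bool" where
  "mixed_config n ws \<longleftrightarrow> length ws = n \<and>
     (\<exists>\<sigma>. bij_betw \<sigma> {1..n} {1..n} \<and>
        (\<forall>i\<in>{1..n}. mixed_path n (0, int i) (ws ! (i - 1)) \<and>
            last (verts (0, int i) (ws ! (i - 1))) = (int (\<sigma> i) - 1, int (\<sigma> i)))) \<and>
     (\<forall>i\<in>{1..n}. \<forall>j\<in>{1..n}. i \<noteq> j \<longrightarrow>
        left_verts (0, int i) (ws ! (i - 1)) \<inter> left_verts (0, int j) (ws ! (j - 1)) = {}) \<and>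
     (\<forall>i\<in>{1..n}. \<forall>j\<in>{1..n}. i \<noteq> j \<longrightarrow>
        right_verts (0, int i) (ws ! (i - 1)) \<inter> right_verts (0, int j) (ws ! (j - 1)) = {})"

definition num_N :: "step list list \<Rightarrow> nat" where
  "num_N ws = (\<Sum>w\<leftarrow>ws. length (filter (\<lambda>s. s = StepN) w))"

definition MM :: "nat \<Rightarrow> nat \<Rightarrow> step list list set" where
  "MM n s = {ws. mixed_config n ws \<and> num_N ws = s}"

definition Phi :: "nat \<Rightarrow> mat \<times> int \<Rightarrow> step list list" where
  "Phi n NE = (case NE of (A, E) \<Rightarrow>
     (let k = kidx n A; b = cval n A; \<beta> = E + ell n A in
      map (\<lambda>i. let a = ainv n A i in
         if i = k - 1 then
           replicate (nat a) StepE @ replicate (nat \<beta>) StepF @ [StepN] @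
           replicate (nat (int k - 2 - a - \<beta>)) StepF
         else if i = k then
           replicate (nat a) StepE @ [StepS] @ replicate (nat b) StepE @
           replicate (nat (int k - 2 - a - b)) StepF
         else
           replicate (nat a) StepE @ replicate (nat (int i - 1 - a)) StepF)
       [1..<n+1]))"

end

theory Submission
  imports Defs
begin


definition kth :: "nat set \<Rightarrow> nat \<Rightarrow> nat" where
  "kth F m = sorted_list_of_set F ! m"

lemma kth_in: "finite F \<Longrightarrow> m < card F \<Longrightarrow> kth F m \<in> F"
  unfolding kth_def by (metis length_sorted_list_of_set nth_mem set_sorted_list_of_set)

lemma card_less_kth:
  assumes "finite F" "m < card F"
  shows "card {v \<in> F. v < kth F m} = m"
proof -
  let ?xs = "sorted_list_of_set F"
  have s: "sorted_wrt (<) ?xs" by (simp add: assms(1))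
  have d: "distinct ?xs" by simp
  have l: "length ?xs = card F" by simp
  have "{v \<in> F. v < kth F m} = set (take m ?xs)"
  proof
    show "{v \<in> F. v < kth F m} \<subseteq> set (take m ?xs)"
    proof
      fix v assume v: "v \<in> {v \<in> F. v < kth F m}"
      then obtain i where i: "i < length ?xs" "?xs ! i = v"
        by (metis (no_types, lifting) assms(1) in_set_conv_nth mem_Collect_eq set_sorted_list_of_set)
      have "i < m"
      proof (rule ccontr)
        assume "\<not> i < m"
        then have "m \<le> i" by simp
        then have "?xs ! m \<le> ?xs ! i"
          using s i by (metis le_eq_less_or_eq order.strict_implies_order sorted_wrt_nth_less)
        then show False using v i unfolding kth_def by simp
      qed
      then show "v \<in> set (take m ?xs)" using i
        by (metis in_set_conv_nth length_take min_less_iff_conj nth_take)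
    qed
  next
    show "set (take m ?xs) \<subseteq> {v \<in> F. v < kth F m}"
    proof
      fix v assume "v \<in> set (take m ?xs)"
      then obtain i where i: "i < m" "?xs ! i = v" using assms l
        by (auto simp: in_set_conv_nth)
      have "?xs ! i < ?xs ! m" using s i assms l sorted_wrt_nth_less by fastforce
      moreover have "v \<in> F" using i assms l
        by (metis dual_order.strict_trans nth_mem set_sorted_list_of_set)
      ultimately show "v \<in> {v \<in> F. v < kth F m}" using i unfolding kth_def by simp
    qed
  qed
  moreover have "card (set (take m ?xs)) = m"
    using d assms l by (simp add: distinct_card)
  ultimately show ?thesis by simp
qed

lemma kth_card_less:
  assumes "finite F" "p \<in> F"
  shows "kth F (card {v \<in> F. v < p}) = p"
proof -
  let ?xs = "sorted_list_of_set F"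
  obtain i where i: "i < length ?xs" "?xs ! i = p"
    by (metis assms in_set_conv_nth set_sorted_list_of_set)
  have "i < card F" using i by simp
  then have "card {v \<in> F. v < kth F i} = i" using card_less_kth assms by blast
  then show ?thesis using i unfolding kth_def by simp
qed


definition Lcode :: "nat \<Rightarrow> (nat \<Rightarrow> nat) \<Rightarrow> nat \<Rightarrow> nat" where
  "Lcode n \<sigma> r = card {r' \<in> {r<..n}. \<sigma> r' < \<sigma> r}"

lemma Lcode_img:
  assumes "inj_on \<sigma> {1..n}" "r \<in> {1..n}"
  shows "Lcode n \<sigma> r = card {v \<in> \<sigma> ` {r..n}. v < \<sigma> r}"
proof -
  have "{v \<in> \<sigma> ` {r..n}. v < \<sigma> r} = \<sigma> ` {r' \<in> {r<..n}. \<sigma> r' < \<sigma> r}"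
    using assms(2) by (auto simp: image_iff) (metis le_neq_implies_less less_irrefl)
  moreover have "inj_on \<sigma> {r' \<in> {r<..n}. \<sigma> r' < \<sigma> r}"
    by (rule inj_on_subset[OF assms(1)]) (use assms(2) in auto)
  ultimately show ?thesis unfolding Lcode_def by (simp add: card_image)
qed

lemma img_tail:
  fixes \<sigma> :: "nat \<Rightarrow> nat"
  assumes "bij_betw \<sigma> {1..n} {1..n}" "1 \<le> r"
  shows "\<sigma> ` {r..n} = {1..n} - \<sigma> ` {1..<r}"
proof -
  have "\<sigma> ` {r..n} \<subseteq> {1..n}"
  proof -
    have "\<sigma> ` {r..n} \<subseteq> \<sigma> ` {1..n}" using assms(2) by (intro image_mono) (auto intro: le_trans)
    then show ?thesis using assms(1) bij_betw_imp_surj_on by blast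
  qed
  moreover have "\<sigma> ` {r..n} \<inter> \<sigma> ` {1..<r} = {}"
  proof -
    have "inj_on \<sigma> {1..n}" using assms bij_betw_def by blast
    show ?thesis
    proof (rule ccontr)
      assume "\<sigma> ` {r..n} \<inter> \<sigma> ` {1..<r} \<noteq> {}"
      then obtain x y where xy: "x \<in> {r..n}" "y \<in> {1..<r}" "\<sigma> x = \<sigma> y" by blast
      then have "x \<in> {1..n}" "y \<in> {1..n}" using assms(2) by auto
      then have "x = y" using \<open>inj_on \<sigma> {1..n}\<close> xy(3) by (meson inj_onD)
      then show False using xy by auto
    qed
  qed
  moreover have "{1..n} \<subseteq> \<sigma> ` {r..n} \<union> \<sigma> ` {1..<r}"
  proof
    fix v assume "v \<in> {1..n}"
    then obtain u where "u \<in> {1..n}" "\<sigma> u = v" using assms(1) by (metis bij_betw_imp_surj_on imageE)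
    then show "v \<in> \<sigma> ` {r..n} \<union> \<sigma> ` {1..<r}" by (cases "u < r") auto
  qed
  ultimately show ?thesis by blast
qed

lemma Lcode_uniq:
  fixes \<sigma> \<tau> :: "nat \<Rightarrow> nat"
  assumes s: "bij_betw \<sigma> {1..n} {1..n}" and t: "bij_betw \<tau> {1..n} {1..n}"
    and L: "\<forall>r\<in>{1..n}. Lcode n \<sigma> r = Lcode n \<tau> r"
  shows "\<forall>r\<in>{1..n}. \<sigma> r = \<tau> r"
proof -
  have "r \<in> {1..n} \<longrightarrow> \<sigma> r = \<tau> r" for r
  proof (induction r rule: less_induct)
    case (less r)
    show ?case
    proof
      assume r: "r \<in> {1..n}"
      have "\<sigma> ` {1..<r} = \<tau> ` {1..<r}"
        using less r by (intro image_cong) auto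
      then have V: "\<sigma> ` {r..n} = \<tau> ` {r..n}" using img_tail[OF s] img_tail[OF t] r by auto
      let ?V = "\<sigma> ` {r..n}"
      have fin: "finite ?V" by simp
      have "\<sigma> r \<in> ?V" "\<tau> r \<in> ?V" using r V by auto
      have ij: "inj_on \<sigma> {1..n}" "inj_on \<tau> {1..n}" using s t bij_betw_def by blast+
      have "kth ?V (Lcode n \<sigma> r) = \<sigma> r"
        using Lcode_img[OF ij(1) r] kth_card_less[OF fin \<open>\<sigma> r \<in> ?V\<close>] by simp
      moreover have "kth ?V (Lcode n \<tau> r) = \<tau> r"
        using Lcode_img[OF ij(2) r] kth_card_less[OF fin \<open>\<tau> r \<in> ?V\<close>] V by simp
      ultimately show "\<sigma> r = \<tau> r" using L r by simp
    qed
  qed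
  then show ?thesis by blast
qed

fun chs :: "nat \<Rightarrow> (nat \<Rightarrow> nat) \<Rightarrow> nat \<Rightarrow> nat list" where
  "chs n L 0 = []"
| "chs n L (Suc r) = chs n L r @ [kth ({1..n} - set (chs n L r)) (L (Suc r))]"

lemma chs_inv:
  assumes "\<forall>r\<in>{1..n}. L r \<le> n - r" "r \<le> n"
  shows "length (chs n L r) = r \<and> distinct (chs n L r) \<and> set (chs n L r) \<subseteq> {1..n}"
  using assms(2)
proof (induction r)
  case 0 then show ?case by simp
next
  case (Suc r)
  let ?F = "{1..n} - set (chs n L r)"
  have IH: "length (chs n L r) = r" "distinct (chs n L r)" "set (chs n L r) \<subseteq> {1..n}"
    using Suc by auto
  have "card ?F = n - r" using IH by (simp add: card_Diff_subset distinct_card)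
  moreover have "L (Suc r) \<le> n - Suc r" using assms(1) Suc.prems by auto
  ultimately have "L (Suc r) < card ?F" using Suc.prems by linarith
  then have "kth ?F (L (Suc r)) \<in> ?F" by (intro kth_in) auto
  then show ?case using IH by auto
qed

lemma length_chs[simp]: "length (chs n L s) = s"
  by (induction s) auto

lemma chs_prefix: "r \<le> s \<Longrightarrow> take r (chs n L s) = chs n L r"
proof (induction s)
  case 0 then show ?case by simp
next
  case (Suc s)
  show ?case
  proof (cases "r = Suc s")
    case True
    then show ?thesis by simp
  next
    case False
    then show ?thesis using Suc by simp
  qed
qed

lemma Lcode_exist:
  assumes L: "\<forall>r\<in>{1..n}. L r \<le> n - r"
  shows "\<exists>\<sigma>. bij_betw \<sigma> {1..n} {1..n} \<and> (\<forall>r\<in>{1..n}. Lcode n \<sigma> r = L r)"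
proof -
  define xs where "xs = chs n L n"
  define \<sigma> where "\<sigma> r = xs ! (r - 1)" for r
  have inv: "length xs = n" "distinct xs" "set xs \<subseteq> {1..n}"
    using chs_inv[OF L, of n] xs_def by auto
  have inj: "inj_on \<sigma> {1..n}"
  proof (rule inj_onI)
    fix x y assume "x \<in> {1..n}" "y \<in> {1..n}" "\<sigma> x = \<sigma> y"
    moreover have "x - 1 < length xs" "y - 1 < length xs" using \<open>x \<in> {1..n}\<close> \<open>y \<in> {1..n}\<close> inv by auto
    ultimately have "x - 1 = y - 1" using inv(2) unfolding \<sigma>_def
      using nth_eq_iff_index_eq by blast
    then show "x = y" using \<open>x \<in> {1..n}\<close> \<open>y \<in> {1..n}\<close> by auto
  qed
  have sub: "\<sigma> ` {1..n} \<subseteq> {1..n}"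
  proof
    fix v assume "v \<in> \<sigma> ` {1..n}"
    then obtain r where "r \<in> {1..n}" "v = xs ! (r - 1)" unfolding \<sigma>_def by auto
    then have "v \<in> set xs" using inv by auto
    then show "v \<in> {1..n}" using inv by auto
  qed
  have bij: "bij_betw \<sigma> {1..n} {1..n}"
  proof -
    have "card (\<sigma> ` {1..n}) = card {1..n}" using inj by (simp add: card_image)
    then have "\<sigma> ` {1..n} = {1..n}" using sub by (simp add: card_subset_eq)
    then show ?thesis using inj bij_betw_def by blast
  qed
  have "Lcode n \<sigma> r = L r" if r: "r \<in> {1..n}" for r
  proof -
    let ?F = "{1..n} - set (chs n L (r - 1))"
    have e1: "chs n L r = take r xs" using chs_prefix[of r n n L] r xs_def by simp
    have e2: "chs n L r = chs n L (r - 1) @ [kth ?F (L r)]"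
      using r by (cases r) auto
    have "\<sigma> r = kth ?F (L r)"
    proof -
      have "\<sigma> r = take r xs ! (r - 1)" unfolding \<sigma>_def using r by simp
      also have "... = kth ?F (L r)" using e1 e2 r by (metis length_chs nth_append_length)
      finally show ?thesis .
    qed
    moreover have "set (chs n L (r - 1)) = \<sigma> ` {1..<r}"
    proof -
      have "r - 1 \<le> n" using r by auto
      then have "chs n L (r - 1) = take (r - 1) xs" using chs_prefix[of "r - 1" n n L] xs_def by simp
      moreover have "r - 1 \<le> length xs" using inv r by auto
      ultimately have "set (chs n L (r - 1)) = (!) xs ` {..<r - 1}"
        using nth_image by (metis atLeast0LessThan)
      also have "... = \<sigma> ` {1..<r}"
      proof -
        have "(\<lambda>r. r - 1) ` {1..<r} = {..<r - 1}"
        proof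
          show "(\<lambda>r. r - 1) ` {1..<r} \<subseteq> {..<r - 1}" by auto
          show "{..<r - 1} \<subseteq> (\<lambda>r. r - 1) ` {1..<r}"
          proof
            fix i assume "i \<in> {..<r - 1}"
            then have "Suc i \<in> {1..<r}" "i = Suc i - 1" by auto
            then show "i \<in> (\<lambda>r. r - 1) ` {1..<r}" by blast
          qed
        qed
        then show ?thesis unfolding \<sigma>_def by (metis image_image)
      qed
      finally show ?thesis .
    qed
    ultimately have F: "\<sigma> ` {r..n} = ?F" "\<sigma> r = kth ?F (L r)"
      using img_tail[OF bij, of r] r by auto
    have "card ?F = n - (r - 1)"
    proof -
      have "r - 1 \<le> n" using r by auto
      from chs_inv[OF L this]
      have "set (chs n L (r - 1)) \<subseteq> {1..n}" "card (set (chs n L (r - 1))) = r - 1"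
        by (auto simp: distinct_card)
      then show ?thesis by (simp add: card_Diff_subset)
    qed
    moreover have "L r \<le> n - r" using L r by blast
    ultimately have "L r < card ?F" using r by auto
    then show ?thesis using Lcode_img[OF inj r] F card_less_kth[of ?F "L r"] by simp
  qed
  then show ?thesis using bij by blast
qed


lemma filter_upt_sorted:
  "filter Q [Suc 0..<Suc n] = sorted_list_of_set {j \<in> {1..n}. Q j}"
proof -
  have "sorted_wrt (<) (filter Q [Suc 0..<Suc n])" by (intro sorted_wrt_filter sorted_wrt_upt)
  moreover have "set (filter Q [Suc 0..<Suc n]) = {j \<in> {1..n}. Q j}" by auto
  moreover have "length (filter Q [Suc 0..<Suc n]) = card {j \<in> {1..n}. Q j}"
    by (metis calculation(2) distinct_card distinct_filter distinct_upt)
  ultimately show ?thesis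
    using sorted_list_of_set_unique[of "{j \<in> {1..n}. Q j}" "filter Q [Suc 0..<Suc n]"] by auto
qed

lemma nz_form:
  "filter (\<lambda>x. x \<noteq> 0) (map f [1..<n+1]) = map f (sorted_list_of_set {j \<in> {1..n}. f j \<noteq> (0::int)})"
proof -
  have "filter (\<lambda>x. x \<noteq> 0) (map f [1..<n+1]) = map f (filter (\<lambda>j. f j \<noteq> 0) [1..<n+1])"
    by (simp only: filter_map comp_def)
  also have "[1..<n+1] = [Suc 0..<Suc n]" by simp
  finally show ?thesis using filter_upt_sorted[of "\<lambda>j. f j \<noteq> 0" n] by (simp del: upt_Suc)
qed

lemma alt_list_one:
  assumes "alternating (map f L)" "\<forall>x\<in>set L. f x = (1::int)"
  shows "\<exists>a. L = [a]"
proof -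
  consider "L = []" | a where "L = [a]" | a b r where "L = a # b # r"
    by (metis list.exhaust)
  then show ?thesis
  proof cases
    case 1 then show ?thesis using assms(1) by (simp add: alternating_def)
  next
    case 2 then show ?thesis by blast
  next
    case (3 a b r)
    have "map f L ! Suc 0 = - (map f L ! 0)" using assms(1) 3 unfolding alternating_def by auto
    then show ?thesis using assms(2) 3 by simp
  qed
qed

lemma alt_list_three:
  fixes L :: "nat list"
  assumes alt: "alternating (map f L)" and s: "sorted_wrt (<) L"
    and j0: "j0 \<in> set L" "f j0 = -1" and uq: "\<forall>j\<in>set L. f j = -1 \<longrightarrow> j = j0"
  shows "\<exists>a c. L = [a, j0, c] \<and> f a = (1::int) \<and> f c = 1"
proof -
  have A: "\<And>k. Suc k < length L \<Longrightarrow> map f L ! Suc k = - (map f L ! k)"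
    using alt unfolding alternating_def by auto
  consider "L = []" | a where "L = [a]" | a b where "L = [a, b]" | a b c where "L = [a, b, c]"
    | a b c d r where "L = a # b # c # d # r"
    by (metis list.exhaust)
  then show ?thesis
  proof cases
    case 1 then show ?thesis using j0 by simp
  next
    case (2 a) then show ?thesis using alt j0 by (simp add: alternating_def)
  next
    case (3 a b)
    then show ?thesis using alt A[of 0] by (simp add: alternating_def)
  next
    case (4 a b c)
    have "f a = 1" using alt 4 by (simp add: alternating_def)
    moreover have "f b = -1" using A[of 0] 4 \<open>f a = 1\<close> by simp
    moreover have "f c = 1" using A[of 1] 4 \<open>f b = -1\<close> by simp
    ultimately show ?thesis using uq 4 by auto
  next
    case (5 a b c d r)
    have "f a = 1" using alt 5 by (simp add: alternating_def)
    moreover have "f b = -1" using A[of 0] 5 \<open>f a = 1\<close> by simp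
    moreover have "f c = 1" using A[of 1] 5 \<open>f b = -1\<close> by simp
    moreover have "f d = -1" using A[of 2] 5 \<open>f c = 1\<close> by simp
    ultimately have "b = j0" "d = j0" using uq 5 by auto
    moreover have "b < d" using s 5 by simp
    ultimately show ?thesis by simp
  qed
qed

lemma alt_one:
  assumes alt: "alternating (filter (\<lambda>x. x \<noteq> 0) (map f [1..<n+1]))"
    and vals: "\<forall>j. f j \<in> {-1, 0, 1}" and noneg: "\<forall>j\<in>{1..n}. f j \<noteq> -1"
  shows "\<exists>j\<in>{1..n}. f j = 1 \<and> (\<forall>j'\<in>{1..n}. f j' \<noteq> 0 \<longrightarrow> j' = j)"
proof -
  define S where "S = {j \<in> {1..n}. f j \<noteq> 0}"
  define L where "L = sorted_list_of_set S"
  have alt': "alternating (map f L)" unfolding L_def S_def using alt by (simp only: nz_form)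
  have fin: "finite S" unfolding S_def by simp
  have setL: "set L = S" using fin unfolding L_def by simp
  have one: "\<forall>x\<in>set L. f x = 1"
  proof
    fix x assume "x \<in> set L"
    then have "x \<in> {1..n}" "f x \<noteq> 0" using setL unfolding S_def by auto
    moreover have "f x \<in> {-1, 0, 1}" using vals by blast
    ultimately show "f x = 1" using noneg by auto
  qed
  obtain j where Lj: "L = [j]" using alt_list_one[OF alt' one] by blast
  then have Sj: "S = {j}" using setL by simp
  have "j \<in> S" using Sj by simp
  then have jn: "j \<in> {1..n}" unfolding S_def by simp
  have "\<forall>j'\<in>{1..n}. f j' \<noteq> 0 \<longrightarrow> j' = j"
  proof (intro ballI impI)
    fix j' assume "j' \<in> {1..n}" "f j' \<noteq> 0"
    then have "j' \<in> S" unfolding S_def by simp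
    then show "j' = j" using Sj by simp
  qed
  moreover have "f j = 1" using one Lj by simp
  ultimately show ?thesis using jn by blast
qed

lemma alt_three:
  assumes alt: "alternating (filter (\<lambda>x. x \<noteq> 0) (map f [1..<n+1]))"
    and vals: "\<forall>j. f j \<in> {-1, 0, 1}" and j0: "j0 \<in> {1..n}" "f j0 = -1"
    and uq: "\<forall>j\<in>{1..n}. f j = -1 \<longrightarrow> j = j0"
  shows "\<exists>j1 j3. j1 < j0 \<and> j0 < j3 \<and> j1 \<in> {1..n} \<and> j3 \<in> {1..n} \<and> f j1 = 1 \<and> f j3 = 1 \<and>
           (\<forall>j\<in>{1..n}. f j \<noteq> 0 \<longrightarrow> j = j1 \<or> j = j0 \<or> j = j3)"
proof -
  define S where "S = {j \<in> {1..n}. f j \<noteq> 0}"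
  define L where "L = sorted_list_of_set S"
  have alt': "alternating (map f L)" unfolding L_def S_def using alt by (simp only: nz_form)
  have fin: "finite S" unfolding S_def by simp
  have setL: "set L = S" using fin unfolding L_def by simp
  have sL: "sorted_wrt (<) L" unfolding L_def by simp
  have j0L: "j0 \<in> set L" using setL j0 unfolding S_def by auto
  have uqL: "\<forall>j\<in>set L. f j = -1 \<longrightarrow> j = j0" using uq setL unfolding S_def by auto
  obtain a c where L: "L = [a, j0, c]" "f a = 1" "f c = 1"
    using alt_list_three[OF alt' sL j0L j0(2) uqL] by blast
  have "a < j0" "j0 < c" using sL L by auto
  moreover have Sj: "S = {a, j0, c}" using setL L by simp
  moreover have "a \<in> S" "c \<in> S" using Sj by simp_all
  then have "a \<in> {1..n}" "c \<in> {1..n}" unfolding S_def by simp_all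
  moreover have "\<forall>j\<in>{1..n}. f j \<noteq> 0 \<longrightarrow> j = a \<or> j = j0 \<or> j = c"
  proof (intro ballI impI)
    fix j' assume "j' \<in> {1..n}" "f j' \<noteq> 0"
    then have "j' \<in> S" unfolding S_def by simp
    then show "j' = a \<or> j' = j0 \<or> j' = c" using Sj by simp
  qed
  ultimately show ?thesis using L by blast
qed

lemma alt_one_rev:
  assumes "j \<in> {1..n}" "f j = 1" "\<forall>j'\<in>{1..n}. j' \<noteq> j \<longrightarrow> f j' = 0"
  shows "alternating (filter (\<lambda>x. x \<noteq> 0) (map f [1..<n+1]))"
proof -
  have "{j' \<in> {1..n}. f j' \<noteq> (0::int)} = {j}"
  proof (intro equalityI subsetI)
    fix x assume "x \<in> {j' \<in> {1..n}. f j' \<noteq> (0::int)}"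
    then show "x \<in> {j}" using assms(3) by auto
  next
    fix x assume "x \<in> {j}"
    then show "x \<in> {j' \<in> {1..n}. f j' \<noteq> (0::int)}" using assms(1,2) by simp
  qed
  then have "filter (\<lambda>x. x \<noteq> 0) (map f [1..<n+1]) = [1]" using nz_form[of f n] assms(2) by simp
  then show ?thesis by (simp add: alternating_def)
qed

lemma alt_three_rev:
  assumes "j1 \<in> {1..n}" "j0 \<in> {1..n}" "j3 \<in> {1..n}" "j1 < j0" "j0 < j3"
    "f j1 = 1" "f j0 = -1" "f j3 = 1"
    "\<forall>j\<in>{1..n}. j \<noteq> j1 \<and> j \<noteq> j0 \<and> j \<noteq> j3 \<longrightarrow> f j = 0"
  shows "alternating (filter (\<lambda>x. x \<noteq> 0) (map f [1..<n+1]))"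
proof -
  have S: "{j \<in> {1..n}. f j \<noteq> (0::int)} = {j1, j0, j3}"
  proof (intro equalityI subsetI)
    fix x assume "x \<in> {j \<in> {1..n}. f j \<noteq> (0::int)}"
    then show "x \<in> {j1, j0, j3}" using assms(9) by auto
  next
    fix x assume "x \<in> {j1, j0, j3}"
    then show "x \<in> {j \<in> {1..n}. f j \<noteq> (0::int)}" using assms(1-3,6-8) by auto
  qed
  have "sorted_list_of_set {j1, j0, j3} = [j1, j0, j3]"
    using sorted_list_of_set_unique[of "{j1, j0, j3}" "[j1, j0, j3]"] assms(4,5) by auto
  then have "filter (\<lambda>x. x \<noteq> 0) (map f [1..<n+1]) = [1, -1, 1]"
    using nz_form[of f n] S assms(6-8) by simp
  then show ?thesis unfolding alternating_def by (auto simp: less_Suc_eq nth_Cons')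
qed


definition mk :: "nat \<Rightarrow> (nat \<Rightarrow> nat) \<Rightarrow> nat \<Rightarrow> nat \<Rightarrow> mat" where
  "mk n \<sigma> q c r j = (if r \<in> {1..n} \<and> j \<in> {1..n} then
     (if r = q then (if j = c then 1 else 0)
      else if r = Suc q then (if j = \<sigma> q \<or> j = \<sigma> (Suc q) then 1 else if j = c then -1 else 0)
      else if j = \<sigma> r then 1 else 0) else 0)"

definition valid :: "nat \<Rightarrow> (nat \<Rightarrow> nat) \<Rightarrow> nat \<Rightarrow> nat \<Rightarrow> bool" where
  "valid n \<sigma> q c \<longleftrightarrow> bij_betw \<sigma> {1..n} {1..n} \<and> 1 \<le> q \<and> c \<in> \<sigma> ` {Suc (Suc q)..n} \<and>
     \<sigma> q < c \<and> c < \<sigma> (Suc q)"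

context
  fixes n :: nat and \<sigma> :: "nat \<Rightarrow> nat" and q c :: nat
  assumes V: "valid n \<sigma> q c"
begin

lemma V_bij: "bij_betw \<sigma> {1..n} {1..n}" using V valid_def by blast
lemma V_inj: "inj_on \<sigma> {1..n}" using V_bij bij_betw_def by blast
lemma V_img: "r \<in> {1..n} \<Longrightarrow> \<sigma> r \<in> {1..n}" using V_bij bij_betwE by blast
lemma V_q: "1 \<le> q" "Suc (Suc q) \<le> n" using V unfolding valid_def by auto
lemma V_qn: "q \<in> {1..n}" "Suc q \<in> {1..n}" using V_q by auto
lemma V_c: "\<sigma> q < c" "c < \<sigma> (Suc q)" using V unfolding valid_def by auto
lemma V_rc: obtains rc where "rc \<in> {Suc (Suc q)..n}" "\<sigma> rc = c" using V unfolding valid_def by auto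
lemma V_cn: "c \<in> {1..n}" using V_rc V_img V_q by (metis atLeastAtMost_iff le_trans le_SucI)
lemma V_eq: "r \<in> {1..n} \<Longrightarrow> r' \<in> {1..n} \<Longrightarrow> \<sigma> r = \<sigma> r' \<longleftrightarrow> r = r'"
  using V_inj by (meson inj_on_eq_iff)
lemma V_surj: "j \<in> {1..n} \<Longrightarrow> \<exists>r\<in>{1..n}. \<sigma> r = j"
  using V_bij by (metis bij_betw_imp_surj_on imageE)

lemma mk_q: "mk n \<sigma> q c q j = (if j = c then 1 else 0)"
  using V_qn V_cn unfolding mk_def by auto
lemma mk_Sq: "mk n \<sigma> q c (Suc q) j =
    (if j = \<sigma> q \<or> j = \<sigma> (Suc q) then 1 else if j = c then -1 else 0)"
proof -
  have "\<sigma> q \<in> {1..n}" "\<sigma> (Suc q) \<in> {1..n}" using V_img V_qn by auto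
  then show ?thesis using V_qn V_cn unfolding mk_def by (simp only: if_True if_False) (cases "j \<in> {1..n}", auto)
qed
lemma mk_oth: "r \<in> {1..n} \<Longrightarrow> r \<noteq> q \<Longrightarrow> r \<noteq> Suc q \<Longrightarrow> mk n \<sigma> q c r j = (if j = \<sigma> r then 1 else 0)"
proof -
  assume a: "r \<in> {1..n}" "r \<noteq> q" "r \<noteq> Suc q"
  then have "\<sigma> r \<in> {1..n}" using V_img by blast
  show ?thesis
  proof (cases "j \<in> {1..n}")
    case True then show ?thesis using a unfolding mk_def by simp
  next
    case False
    then have "j \<noteq> \<sigma> r" using \<open>\<sigma> r \<in> {1..n}\<close> by blast
    then show ?thesis using a False unfolding mk_def by simp
  qed
qed
lemma mk_out: "r \<notin> {1..n} \<Longrightarrow> mk n \<sigma> q c r j = 0"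
  unfolding mk_def by (rule if_not_P) blast
lemma mk_outj: "j \<notin> {1..n} \<Longrightarrow> mk n \<sigma> q c r j = 0"
  unfolding mk_def by (rule if_not_P) blast

lemma mk_cases:
  "mk n \<sigma> q c r j = (if r = q then (if j = c then 1 else 0)
      else if r = Suc q then (if j = \<sigma> q \<or> j = \<sigma> (Suc q) then 1 else if j = c then -1 else 0)
      else if r \<in> {1..n} \<and> j = \<sigma> r then 1 else 0)"
proof -
  consider "r = q" | "r = Suc q" | "r \<noteq> q" "r \<noteq> Suc q" "r \<in> {1..n}" | "r \<notin> {1..n}" by blast
  then show ?thesis
  proof cases
    case 1 then show ?thesis using mk_q by simp
  next
    case 2 then show ?thesis using mk_Sq V_q by simp
  next
    case 3 then show ?thesis using mk_oth by simp
  next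
    case 4 then show ?thesis using mk_out V_qn by auto
  qed
qed

lemma mk_neg: "mk n \<sigma> q c r j = -1 \<longleftrightarrow> r = Suc q \<and> j = c"
proof
  assume h: "mk n \<sigma> q c r j = -1"
  have r: "r \<in> {1..n}" using h mk_out by fastforce
  show "r = Suc q \<and> j = c"
  proof (cases "r = q")
    case True then show ?thesis using h mk_q by (simp split: if_splits)
  next
    case False
    show ?thesis
    proof (cases "r = Suc q")
      case True then show ?thesis using h mk_Sq by (simp split: if_splits)
    next
      case False
      then show ?thesis using h mk_oth[OF r \<open>r \<noteq> q\<close> False] by (simp split: if_splits)
    qed
  qed
next
  assume "r = Suc q \<and> j = c"
  then show "mk n \<sigma> q c r j = -1" using mk_Sq V_c by auto
qed

lemma mk_vals: "mk n \<sigma> q c r j \<in> {-1, 0, 1}"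
  unfolding mk_cases by simp

lemma mk_rows: "r \<in> {1..n} \<Longrightarrow> alternating (nz_row n (mk n \<sigma> q c) r)"
proof -
  assume r: "r \<in> {1..n}"
  consider "r = q" | "r = Suc q" | "r \<noteq> q" "r \<noteq> Suc q" by blast
  then show ?thesis
  proof cases
    case 1
    show ?thesis unfolding nz_row_def
      by (rule alt_one_rev[of c]) (use V_cn 1 mk_q in auto)
  next
    case 2
    show ?thesis unfolding nz_row_def
      by (rule alt_three_rev[of "\<sigma> q" n c "\<sigma> (Suc q)"])
         (use V_cn 2 mk_Sq V_c V_img[of q] V_img[of "Suc q"] V_qn in auto)
  next
    case 3
    show ?thesis unfolding nz_row_def
      by (rule alt_one_rev[of "\<sigma> r"]) (use V_img[of r] r 3 mk_oth in auto)
  qed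
qed

lemma mk_cols: "j \<in> {1..n} \<Longrightarrow> alternating (nz_col n (mk n \<sigma> q c) j)"
proof -
  assume j: "j \<in> {1..n}"
  obtain r' where r': "r' \<in> {1..n}" "\<sigma> r' = j" using V_surj[OF j] by blast
  obtain rc where rc: "rc \<in> {Suc (Suc q)..n}" "\<sigma> rc = c" using V_rc by blast
  have rcn: "rc \<in> {1..n}" using rc V_q by auto
  consider "j = c" | "j \<noteq> c" "r' = q \<or> r' = Suc q" | "j \<noteq> c" "r' \<noteq> q" "r' \<noteq> Suc q" by blast
  then show ?thesis
  proof cases
    case 1
    have oth: "\<forall>i\<in>{1..n}. i \<noteq> q \<and> i \<noteq> Suc q \<and> i \<noteq> rc \<longrightarrow> mk n \<sigma> q c i j = 0"
    proof (intro ballI impI)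
      fix i assume i: "i \<in> {1..n}" "i \<noteq> q \<and> i \<noteq> Suc q \<and> i \<noteq> rc"
      then have "\<sigma> i \<noteq> c" using V_eq[OF i(1) rcn] rc by auto
      then show "mk n \<sigma> q c i j = 0" using mk_oth i 1 by auto
    qed
    have rc1: "mk n \<sigma> q c rc j = 1" using mk_oth[OF rcn] rc 1 by auto
    show ?thesis unfolding nz_col_def
      by (rule alt_three_rev[of q n "Suc q" rc]) (use V_qn rcn rc rc1 1 mk_q mk_Sq V_c oth in auto)
  next
    case 2
    have oth: "\<forall>i\<in>{1..n}. i \<noteq> Suc q \<longrightarrow> mk n \<sigma> q c i j = 0"
    proof (intro ballI impI)
      fix i assume i: "i \<in> {1..n}" "i \<noteq> Suc q"
      show "mk n \<sigma> q c i j = 0"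
      proof (cases "i = q")
        case True then show ?thesis using mk_q 2 by simp
      next
        case False
        then have "\<sigma> i \<noteq> j" using V_eq[OF i(1) r'(1)] r' 2 i by auto
        then show ?thesis using mk_oth i False by auto
      qed
    qed
    have "mk n \<sigma> q c (Suc q) j = 1" using mk_Sq 2 r' by auto
    then show ?thesis unfolding nz_col_def
      by (rule alt_one_rev[OF V_qn(2)]) (use oth in auto)
  next
    case 3
    have oth: "\<forall>i\<in>{1..n}. i \<noteq> r' \<longrightarrow> mk n \<sigma> q c i j = 0"
    proof (intro ballI impI)
      fix i assume i: "i \<in> {1..n}" "i \<noteq> r'"
      have ne: "\<sigma> i \<noteq> j" using V_eq[OF i(1) r'(1)] r' i by auto
      consider "i = q" | "i = Suc q" | "i \<noteq> q" "i \<noteq> Suc q" by blast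
      then show "mk n \<sigma> q c i j = 0"
      proof cases
        case 1 then show ?thesis using mk_q 3 by simp
      next
        case 2 then show ?thesis using mk_Sq 3 ne V_eq[OF V_qn(1) r'(1)] r' by auto
      next
        case 3 then show ?thesis using mk_oth i ne by auto
      qed
    qed
    have "mk n \<sigma> q c r' j = 1" using mk_oth[OF r'(1)] 3 r' by auto
    then show ?thesis unfolding nz_col_def
      by (rule alt_one_rev[OF r'(1)]) (use oth in auto)
  qed
qed

lemma mk_ASM: "is_ASM n (mk n \<sigma> q c)"
  unfolding is_ASM_def using mk_rows mk_cols mk_vals mk_out mk_outj by blast

lemma mk_negset: "{(i, j). i \<in> {1..n} \<and> j \<in> {1..n} \<and> mk n \<sigma> q c i j = -1} = {(Suc q, c)}"
  using mk_neg V_qn V_cn by auto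

lemma mk_ASM1: "mk n \<sigma> q c \<in> ASM1 n"
  unfolding ASM1_def using mk_ASM mk_negset by simp

lemma mk_the_neg: "(THE p. mk n \<sigma> q c (fst p) (snd p) = -1) = (Suc q, c)"
  by (rule the_equality) (auto simp: mk_neg)

lemma mk_closing_row: "closing_row (mk n \<sigma> q c) = Suc q"
  unfolding closing_row_def mk_the_neg by simp
lemma mk_opening_col: "opening_col (mk n \<sigma> q c) = c"
  unfolding opening_col_def mk_the_neg by simp

lemma mk_col_c_one: "mk n \<sigma> q c i c = 1 \<Longrightarrow> i = q \<or> Suc (Suc q) \<le> i"
proof -
  assume h: "mk n \<sigma> q c i c = 1"
  obtain rc where rc: "rc \<in> {Suc (Suc q)..n}" "\<sigma> rc = c" using V_rc by blast
  have rcn: "rc \<in> {1..n}" using rc V_q by auto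
  show ?thesis
  proof (rule ccontr)
    assume a: "\<not> (i = q \<or> Suc (Suc q) \<le> i)"
    then have "i \<noteq> Suc q" using h mk_Sq V_c by auto
    moreover have "i \<in> {1..n}" using h mk_out by fastforce
    ultimately have "\<sigma> i = c" using h mk_oth a by (auto split: if_splits)
    then have "i = rc" using V_eq[OF \<open>i \<in> {1..n}\<close> rcn] rc by simp
    then show False using a rc by simp
  qed
qed

lemma mk_opening_row: "opening_row (mk n \<sigma> q c) = q"
  unfolding opening_row_def mk_closing_row mk_opening_col
proof (rule the_equality)
  show "q < Suc q \<and> mk n \<sigma> q c q c = 1" using mk_q by simp
next
  fix i assume "i < Suc q \<and> mk n \<sigma> q c i c = 1"
  then show "i = q" using mk_col_c_one by fastforce
qed

lemma mk_closing_col: "closing_col (mk n \<sigma> q c) = \<sigma> (Suc q)"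
  unfolding closing_col_def mk_closing_row mk_opening_col
proof (rule the_equality)
  show "c < \<sigma> (Suc q) \<and> mk n \<sigma> q c (Suc q) (\<sigma> (Suc q)) = 1" using mk_Sq V_c by simp
next
  fix j assume "c < j \<and> mk n \<sigma> q c (Suc q) j = 1"
  then show "j = \<sigma> (Suc q)" using mk_Sq V_c by (auto split: if_splits)
qed

lemma mk_neutral: "neutral (mk n \<sigma> q c)"
  unfolding neutral_def mk_closing_row mk_opening_row by simp

lemma mk_leading_row: "leading_row (mk n \<sigma> q c) = Suc q"
  unfolding leading_row_def mk_opening_row mk_opening_col
proof (rule Least_equality)
  have "mk n \<sigma> q c (Suc q) (\<sigma> q) = 1" by (simp add: mk_Sq)
  then show "q < Suc q \<and> (\<exists>j<c. mk n \<sigma> q c (Suc q) j = 1)" using V_c by blast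
next
  fix y assume "q < y \<and> (\<exists>j<c. mk n \<sigma> q c y j = 1)"
  then show "Suc q \<le> y" by simp
qed

lemma mk_leading_col: "leading_col (mk n \<sigma> q c) = \<sigma> q"
  unfolding leading_col_def mk_leading_row mk_opening_col
proof (rule the_equality)
  show "\<sigma> q < c \<and> mk n \<sigma> q c (Suc q) (\<sigma> q) = 1" using mk_Sq V_c by simp
next
  fix j assume "j < c \<and> mk n \<sigma> q c (Suc q) j = 1"
  then show "j = \<sigma> q" using mk_Sq V_c by (auto split: if_splits)
qed

lemma mk_kidx: "kidx n (mk n \<sigma> q c) = n + 1 - q"
  unfolding kidx_def mk_opening_row by simp

lemma mk_leftmost1:
  assumes r: "r \<in> {1..n}"
  shows "leftmost1 (mk n \<sigma> q c) r = (if r = q then c else if r = Suc q then \<sigma> q else \<sigma> r)"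
proof -
  consider "r = q" | "r = Suc q" | "r \<noteq> q" "r \<noteq> Suc q" by blast
  then show ?thesis
  proof cases
    case 1
    then show ?thesis unfolding leftmost1_def
      by (intro Least_equality) (auto simp: mk_q split: if_splits)
  next
    case 2
    then show ?thesis unfolding leftmost1_def
      by (intro Least_equality) (use V_c in \<open>auto simp: mk_Sq split: if_splits\<close>)
  next
    case 3
    then show ?thesis unfolding leftmost1_def
      by (intro Least_equality) (use r in \<open>auto simp: mk_oth split: if_splits\<close>)
  qed
qed


lemma mk_decomp:
  "mk n \<sigma> q c r j = of_bool (r \<in> {1..n} \<and> j \<in> {1..n} \<and> \<sigma> r = j) +
     (of_bool (r = q) - of_bool (r = Suc q)) * (of_bool (j = c) - of_bool (j = \<sigma> q))"
proof -
  have sq: "\<sigma> q \<in> {1..n}" "\<sigma> (Suc q) \<in> {1..n}" using V_img V_qn by auto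
  have ne: "\<sigma> q \<noteq> c" "\<sigma> q \<noteq> \<sigma> (Suc q)" "c \<noteq> \<sigma> (Suc q)" using V_c by auto
  consider "r = q" | "r = Suc q" | "r \<noteq> q" "r \<noteq> Suc q" "r \<in> {1..n}" | "r \<notin> {1..n}" by blast
  then show ?thesis
  proof cases
    case 1
    have "mk n \<sigma> q c r j = (if j = c then 1 else 0)" using 1 mk_q by simp
    then show ?thesis using 1 V_qn V_cn sq ne by (cases "j = c"; cases "j = \<sigma> q") auto
  next
    case 2
    have "mk n \<sigma> q c r j = (if j = \<sigma> q \<or> j = \<sigma> (Suc q) then 1 else if j = c then -1 else 0)"
      using 2 mk_Sq by simp
    then show ?thesis using 2 V_qn V_cn sq ne by (cases "j = c"; cases "j = \<sigma> q"; cases "j = \<sigma> (Suc q)") auto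
  next
    case 3
    then show ?thesis using V_img[of r] mk_oth[of r j] by (cases "j = \<sigma> r") auto
  next
    case 4
    moreover have "r \<noteq> q" "r \<noteq> Suc q" using 4 V_qn by auto
    ultimately show ?thesis using mk_out[OF 4] 4 by auto
  qed
qed

lemma sum_ofb_eq: "finite A \<Longrightarrow> (\<Sum>x\<in>A. (of_bool (x = a) :: int)) = of_bool (a \<in> A)"
  by (simp add: of_bool_def)

lemma mk_sum:
  assumes R: "R \<subseteq> {1..n}" and J: "J \<subseteq> {1..n}"
  shows "(\<Sum>r\<in>R. \<Sum>j\<in>J. mk n \<sigma> q c r j) = int (card {r \<in> R. \<sigma> r \<in> J}) +
     (of_bool (q \<in> R) - of_bool (Suc q \<in> R)) * (of_bool (c \<in> J) - of_bool (\<sigma> q \<in> J))"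
proof -
  have fR: "finite R" using R finite_subset by blast
  have fJ: "finite J" using J finite_subset by blast
  have "(\<Sum>r\<in>R. \<Sum>j\<in>J. mk n \<sigma> q c r j) =
      (\<Sum>r\<in>R. \<Sum>j\<in>J. (of_bool (r \<in> {1..n} \<and> j \<in> {1..n} \<and> \<sigma> r = j) :: int)) +
      (\<Sum>r\<in>R. (of_bool (r = q) - of_bool (r = Suc q))) * (\<Sum>j\<in>J. (of_bool (j = c) - of_bool (j = \<sigma> q)))"
    unfolding mk_decomp by (simp only: sum.distrib sum_distrib_left[symmetric] sum_distrib_right[symmetric])
  also have "(\<Sum>r\<in>R. \<Sum>j\<in>J. (of_bool (r \<in> {1..n} \<and> j \<in> {1..n} \<and> \<sigma> r = j) :: int)) =
      (\<Sum>r\<in>R. (of_bool (\<sigma> r \<in> J) :: int))"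
  proof (rule sum.cong[OF refl])
    fix r assume r: "r \<in> R"
    have "(\<Sum>j\<in>J. (of_bool (r \<in> {1..n} \<and> j \<in> {1..n} \<and> \<sigma> r = j) :: int)) =
        (\<Sum>j\<in>J. (of_bool (j = \<sigma> r) :: int))"
      using r R J by (intro sum.cong) auto
    also have "... = of_bool (\<sigma> r \<in> J)" using sum_ofb_eq[OF fJ] by simp
    finally show "(\<Sum>j\<in>J. (of_bool (r \<in> {1..n} \<and> j \<in> {1..n} \<and> \<sigma> r = j) :: int)) = of_bool (\<sigma> r \<in> J)" .
  qed
  also have "(\<Sum>r\<in>R. (of_bool (\<sigma> r \<in> J) :: int)) = int (card {r \<in> R. \<sigma> r \<in> J})"
  proof -
    have "(\<Sum>r\<in>R. (of_bool (\<sigma> r \<in> J) :: int)) = of_nat (card (R \<inter> {r. \<sigma> r \<in> J}))"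
      using fR by simp
    moreover have "R \<inter> {r. \<sigma> r \<in> J} = {r \<in> R. \<sigma> r \<in> J}" by blast
    ultimately show ?thesis by simp
  qed
  also have "(\<Sum>r\<in>R. (of_bool (r = q) - of_bool (r = Suc q) :: int)) = of_bool (q \<in> R) - of_bool (Suc q \<in> R)"
    using fR by (simp add: sum_subtractf sum_ofb_eq)
  also have "(\<Sum>j\<in>J. (of_bool (j = c) - of_bool (j = \<sigma> q) :: int)) = of_bool (c \<in> J) - of_bool (\<sigma> q \<in> J)"
    using fJ by (simp add: sum_subtractf sum_ofb_eq)
  finally show ?thesis .
qed

lemma card_lt_shift:
  assumes "R \<subseteq> {1..n}"
  shows "{r \<in> R. \<sigma> r \<in> {1..<p}} = {r \<in> R. \<sigma> r < p}"
  using assms V_img by fastforce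

lemma mk_ainv_oth:
  assumes i: "i \<in> {1..n}" and ne: "n + 1 - i \<noteq> q" "n + 1 - i \<noteq> Suc q"
  shows "ainv n (mk n \<sigma> q c) i = int (Lcode n \<sigma> (n + 1 - i))"
proof -
  let ?r = "n + 1 - i"
  have r: "?r \<in> {1..n}" using i by auto
  have p: "leftmost1 (mk n \<sigma> q c) ?r = \<sigma> ?r" using mk_leftmost1[OF r] ne by simp
  have R: "{?r<..n} \<subseteq> {1..n}" by auto
  have J: "{1..<\<sigma> ?r} \<subseteq> {1..n}" using V_img[OF r] by auto
  have z: "(of_bool (q \<in> {?r<..n}) - of_bool (Suc q \<in> {?r<..n}) :: int) = 0"
    using ne V_q by auto
  show ?thesis unfolding ainv_def p mk_sum[OF R J] z card_lt_shift[OF R] Lcode_def by simp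
qed

lemma mk_ainv_k:
  "ainv n (mk n \<sigma> q c) (n + 1 - q) = int (card {r \<in> {q<..n}. \<sigma> r < c}) + 1"
proof -
  have e: "n + 1 - (n + 1 - q) = q" using V_q by auto
  have p: "leftmost1 (mk n \<sigma> q c) q = c" using mk_leftmost1[OF V_qn(1)] by simp
  have R: "{q<..n} \<subseteq> {1..n}" by auto
  have J: "{1..<c} \<subseteq> {1..n}" using V_cn by auto
  have z: "(of_bool (q \<in> {q<..n}) - of_bool (Suc q \<in> {q<..n}) :: int) = -1"
    using V_q by auto
  have z2: "(of_bool (c \<in> {1..<c}) - of_bool (\<sigma> q \<in> {1..<c}) :: int) = -1"
    using V_c V_img[OF V_qn(1)] by auto
  show ?thesis unfolding ainv_def e p mk_sum[OF R J] z z2 card_lt_shift[OF R] by simp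
qed

lemma mk_ainv_k1:
  "ainv n (mk n \<sigma> q c) (n - q) = int (card {r \<in> {Suc q<..n}. \<sigma> r < \<sigma> q})"
proof -
  have e: "n + 1 - (n - q) = Suc q" using V_q by auto
  have p: "leftmost1 (mk n \<sigma> q c) (Suc q) = \<sigma> q" using mk_leftmost1[OF V_qn(2)] by simp
  have R: "{Suc q<..n} \<subseteq> {1..n}" by auto
  have J: "{1..<\<sigma> q} \<subseteq> {1..n}" using V_img[OF V_qn(1)] by auto
  have z: "(of_bool (q \<in> {Suc q<..n}) - of_bool (Suc q \<in> {Suc q<..n}) :: int) = 0"
    by auto
  show ?thesis unfolding ainv_def e p mk_sum[OF R J] z card_lt_shift[OF R] by simp
qed

lemma mk_ell:
  "ell n (mk n \<sigma> q c) = int (card {r \<in> {q<..n}. \<sigma> q < \<sigma> r \<and> \<sigma> r < c})"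
proof -
  have R: "{q<..n} \<subseteq> {1..n}" by auto
  have J: "{\<sigma> q<..<c} \<subseteq> {1..n}" using V_cn by auto
  have z: "(of_bool (c \<in> {\<sigma> q<..<c}) - of_bool (\<sigma> q \<in> {\<sigma> q<..<c}) :: int) = 0"
    by auto
  have e: "{r \<in> {q<..n}. \<sigma> r \<in> {\<sigma> q<..<c}} = {r \<in> {q<..n}. \<sigma> q < \<sigma> r \<and> \<sigma> r < c}" by auto
  show ?thesis unfolding ell_def mk_opening_row mk_leading_col mk_opening_col mk_sum[OF R J] z e by simp
qed

lemma mk_cval:
  "cval n (mk n \<sigma> q c) = int (card {r \<in> {Suc q<..n}. c < \<sigma> r \<and> \<sigma> r < \<sigma> (Suc q)})"
proof -
  have R: "{Suc q<..n} \<subseteq> {1..n}" by auto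
  have J: "{c<..<\<sigma> (Suc q)} \<subseteq> {1..n}" using V_img[OF V_qn(2)] by auto
  have z: "(of_bool (q \<in> {Suc q<..n}) - of_bool (Suc q \<in> {Suc q<..n}) :: int) = 0"
    by auto
  have e: "{r \<in> {Suc q<..n}. \<sigma> r \<in> {c<..<\<sigma> (Suc q)}} = {r \<in> {Suc q<..n}. c < \<sigma> r \<and> \<sigma> r < \<sigma> (Suc q)}" by auto
  show ?thesis unfolding cval_def mk_closing_row mk_closing_col mk_opening_col mk_sum[OF R J] z e by simp
qed

end


lemma asm_to_mk:
  assumes A1: "A \<in> ASM1 n" and neu: "neutral A"
  shows "\<exists>\<sigma> q c. valid n \<sigma> q c \<and> A = mk n \<sigma> q c"
proof -
  have asm: "is_ASM n A" and cd: "card {(i, j). i \<in> {1..n} \<and> j \<in> {1..n} \<and> A i j = -1} = 1"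
    using A1 unfolding ASM1_def by auto
  have supp: "\<And>i j. A i j \<noteq> 0 \<Longrightarrow> i \<in> {1..n} \<and> j \<in> {1..n}" using asm unfolding is_ASM_def by blast
  have vals: "\<And>i j. A i j \<in> {-1, 0, 1}" using asm unfolding is_ASM_def by blast
  have rows: "\<And>i. i \<in> {1..n} \<Longrightarrow> alternating (filter (\<lambda>x. x \<noteq> 0) (map (A i) [1..<n+1]))"
    using asm unfolding is_ASM_def nz_row_def by blast
  have cols: "\<And>j. j \<in> {1..n} \<Longrightarrow> alternating (filter (\<lambda>x. x \<noteq> 0) (map (\<lambda>i. A i j) [1..<n+1]))"
    using asm unfolding is_ASM_def nz_col_def by blast
  obtain p where p: "{(i, j). i \<in> {1..n} \<and> j \<in> {1..n} \<and> A i j = -1} = {p}"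
    using cd card_1_singletonE by blast
  obtain r0 c where pc: "p = (r0, c)" by (cases p)
  have neg: "\<And>i j. A i j = -1 \<longleftrightarrow> i = r0 \<and> j = c"
  proof
    fix i j assume "A i j = -1"
    then have "i \<in> {1..n}" "j \<in> {1..n}" using supp[of i j] by auto
    then have "(i, j) \<in> {(i, j). i \<in> {1..n} \<and> j \<in> {1..n} \<and> A i j = -1}" using \<open>A i j = -1\<close> by simp
    then have "(i, j) \<in> {p}" by (simp only: p)
    then show "i = r0 \<and> j = c" using pc by simp
  next
    fix i j assume "i = r0 \<and> j = c"
    moreover have "(r0, c) \<in> {(i, j). i \<in> {1..n} \<and> j \<in> {1..n} \<and> A i j = -1}"
      unfolding p pc by simp
    ultimately show "A i j = -1" by simp
  qed
  have "A r0 c = -1" using neg by simp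
  then have r0n: "r0 \<in> {1..n}" and cn: "c \<in> {1..n}" using supp[of r0 c] by auto
  have cr: "closing_row A = r0" and oc: "opening_col A = c"
  proof -
    have "(THE p. A (fst p) (snd p) = -1) = (r0, c)"
      by (rule the_equality) (auto simp: neg)
    then show "closing_row A = r0" "opening_col A = c" unfolding closing_row_def opening_col_def by simp_all
  qed
  obtain i1 i2 where col: "i1 < r0" "r0 < i2" "i1 \<in> {1..n}" "i2 \<in> {1..n}" "A i1 c = 1" "A i2 c = 1"
    "\<forall>i\<in>{1..n}. A i c \<noteq> 0 \<longrightarrow> i = i1 \<or> i = r0 \<or> i = i2"
    using alt_three[of "\<lambda>i. A i c" n r0, OF cols[OF cn]] vals r0n neg by blast
  have orow: "opening_row A = i1"
    unfolding opening_row_def cr oc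
  proof (rule the_equality)
    show "i1 < r0 \<and> A i1 c = 1" using col by simp
  next
    fix i assume i: "i < r0 \<and> A i c = 1"
    then have "i \<in> {1..n}" using supp[of i c] by auto
    then show "i = i1" using col(7) i col(2) by fastforce
  qed
  define q where "q = i1"
  have r0q: "r0 = Suc q" using neu unfolding neutral_def cr orow q_def by simp
  obtain j1 j3 where row0: "j1 < c" "c < j3" "j1 \<in> {1..n}" "j3 \<in> {1..n}" "A r0 j1 = 1" "A r0 j3 = 1"
    "\<forall>j\<in>{1..n}. A r0 j \<noteq> 0 \<longrightarrow> j = j1 \<or> j = c \<or> j = j3"
    using alt_three[of "A r0" n c, OF rows[OF r0n]] vals cn neg by blast
  have orow1: "\<forall>r\<in>{1..n} - {r0}. \<exists>j\<in>{1..n}. A r j = 1 \<and> (\<forall>j'\<in>{1..n}. A r j' \<noteq> 0 \<longrightarrow> j' = j)"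
  proof
    fix r assume r: "r \<in> {1..n} - {r0}"
    show "\<exists>j\<in>{1..n}. A r j = 1 \<and> (\<forall>j'\<in>{1..n}. A r j' \<noteq> 0 \<longrightarrow> j' = j)"
      by (rule alt_one[OF rows]) (use r vals neg in auto)
  qed
  then obtain g where g: "\<And>r. r \<in> {1..n} - {r0} \<Longrightarrow> g r \<in> {1..n} \<and> A r (g r) = 1 \<and> (\<forall>j'\<in>{1..n}. A r j' \<noteq> 0 \<longrightarrow> j' = g r)"
    by metis
  have ocol: "\<And>j. j \<in> {1..n} \<Longrightarrow> j \<noteq> c \<Longrightarrow> \<exists>i\<in>{1..n}. A i j = 1 \<and> (\<forall>i'\<in>{1..n}. A i' j \<noteq> 0 \<longrightarrow> i' = i)"
  proof -
    fix j assume j: "j \<in> {1..n}" "j \<noteq> c"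
    show "\<exists>i\<in>{1..n}. A i j = 1 \<and> (\<forall>i'\<in>{1..n}. A i' j \<noteq> 0 \<longrightarrow> i' = i)"
      by (rule alt_one[of "\<lambda>i. A i j", OF cols[OF j(1)]]) (use j vals neg in auto)
  qed
  have qn: "q \<in> {1..n}" using col q_def by simp
  have gq: "g q = c"
  proof -
    have "q \<in> {1..n} - {r0}" using qn r0q by simp
    then show ?thesis using g[of q] col(5) cn q_def by auto
  qed
  define \<sigma> where "\<sigma> r = (if r = q then j1 else if r = Suc q then j3 else g r)" for r
  have \<sigma>n: "\<And>r. r \<in> {1..n} \<Longrightarrow> \<sigma> r \<in> {1..n}"
    unfolding \<sigma>_def using row0 g r0q by auto
  have Arow: "\<And>r. r \<in> {1..n} \<Longrightarrow> r \<noteq> q \<Longrightarrow> r \<noteq> Suc q \<Longrightarrow> A r (\<sigma> r) = 1"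
    unfolding \<sigma>_def using g r0q by auto
  have Aq: "A (Suc q) (\<sigma> q) = 1" "A (Suc q) (\<sigma> (Suc q)) = 1"
    unfolding \<sigma>_def using row0 r0q by auto
  have \<sigma>c: "\<sigma> q \<noteq> c" "\<sigma> (Suc q) \<noteq> c" "\<sigma> q < c" "c < \<sigma> (Suc q)"
    unfolding \<sigma>_def using row0 by auto
  have colu: "\<And>i i' j. i \<in> {1..n} \<Longrightarrow> i' \<in> {1..n} \<Longrightarrow> j \<noteq> c \<Longrightarrow> A i j = 1 \<Longrightarrow> A i' j = 1 \<Longrightarrow> i = i'"
  proof -
    fix i i' j assume h: "i \<in> {1..n}" "i' \<in> {1..n}" "j \<noteq> c" "A i j = 1" "A i' j = 1"
    then have jn: "j \<in> {1..n}" using supp[of i j] by auto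
    obtain k where "k \<in> {1..n}" and kk: "\<forall>i'\<in>{1..n}. A i' j \<noteq> 0 \<longrightarrow> i' = k" using ocol[OF jn h(3)] by blast
    have "i = k" using kk h(1,4) by simp
    moreover have "i' = k" using kk h(2,5) by simp
    ultimately show "i = i'" by simp
  qed
  have inj: "inj_on \<sigma> {1..n}"
  proof (rule inj_onI)
    fix r r' assume r: "r \<in> {1..n}" and r': "r' \<in> {1..n}" and e: "\<sigma> r = \<sigma> r'"
    show "r = r'"
    proof (cases "r \<in> {q, Suc q}")
      case True
      note rT = True
      show ?thesis
      proof (cases "r' \<in> {q, Suc q}")
        case True
        then show ?thesis using rT e \<sigma>c by auto
      next
        case False
        have "A (Suc q) (\<sigma> r) = 1" "\<sigma> r \<noteq> c" using rT Aq \<sigma>c by auto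
        moreover have "A r' (\<sigma> r') = 1" using Arow r' False by auto
        ultimately have "Suc q = r'" using colu[of "Suc q" r' "\<sigma> r"] r' e r0q r0n by auto
        then show ?thesis using False by simp
      qed
    next
      case False
      note rF = False
      show ?thesis
      proof (cases "r' \<in> {q, Suc q}")
        case True
        have "A (Suc q) (\<sigma> r') = 1" "\<sigma> r' \<noteq> c" using True Aq \<sigma>c by auto
        moreover have "A r (\<sigma> r) = 1" using Arow r rF by auto
        ultimately have "Suc q = r" using colu[of "Suc q" r "\<sigma> r'"] r e r0q r0n by auto
        then show ?thesis using rF by simp
      next
        case False
        have a1: "A r (\<sigma> r) = 1" "A r' (\<sigma> r') = 1" using Arow r r' rF False by auto
        show ?thesis
        proof (cases "\<sigma> r = c")
          case True
          have "r = i1 \<or> r = r0 \<or> r = i2" "r' = i1 \<or> r' = r0 \<or> r' = i2"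
            using col(7) r r' a1 True e by auto
          then show ?thesis using rF False r0q q_def by auto
        next
          case False
          then show ?thesis using colu[OF r r' False] a1 e by simp
        qed
      qed
    qed
  qed
  have bij: "bij_betw \<sigma> {1..n} {1..n}"
  proof -
    have sub: "\<sigma> ` {1..n} \<subseteq> {1..n}" using \<sigma>n by auto
    have "card (\<sigma> ` {1..n}) = card {1..n}" using inj by (simp add: card_image)
    then have "\<sigma> ` {1..n} = {1..n}" using sub by (simp add: card_subset_eq)
    then show ?thesis using inj bij_betw_def by blast
  qed
  have i2c: "\<sigma> i2 = c"
  proof -
    have "i2 \<noteq> q" "i2 \<noteq> Suc q" using col r0q q_def by auto
    then have "\<sigma> i2 = g i2" unfolding \<sigma>_def by simp
    moreover have "i2 \<in> {1..n} - {r0}" using col by auto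
    then have "\<forall>j'\<in>{1..n}. A i2 j' \<noteq> 0 \<longrightarrow> j' = g i2" using g by blast
    then have "c = g i2" using col(6) cn by simp
    ultimately show ?thesis by simp
  qed
  have V: "valid n \<sigma> q c"
    unfolding valid_def
  proof (intro conjI)
    show "bij_betw \<sigma> {1..n} {1..n}" by (rule bij)
    show "1 \<le> q" using qn by simp
    show "c \<in> \<sigma> ` {Suc (Suc q)..n}" using i2c col r0q by auto
    show "\<sigma> q < c" "c < \<sigma> (Suc q)" using \<sigma>c by auto
  qed
  have "A = mk n \<sigma> q c"
  proof (intro ext)
    fix r j
    consider "r \<notin> {1..n}" | "r = q" | "r = Suc q" | "r \<in> {1..n}" "r \<noteq> q" "r \<noteq> Suc q" by blast
    then show "A r j = mk n \<sigma> q c r j"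
    proof cases
      case 1
      then show ?thesis using mk_out[OF V 1] supp[of r j] by auto
    next
      case 2
      have "q \<in> {1..n} - {r0}" using qn r0q by simp
      then have uq: "\<forall>j'\<in>{1..n}. A q j' \<noteq> 0 \<longrightarrow> j' = g q" using g by blast
      have "A q j = (if j = c then 1 else 0)"
      proof (cases "j = c")
        case True then show ?thesis using col(5) q_def by simp
      next
        case False
        show ?thesis
        proof (rule ccontr)
          assume "A q j \<noteq> (if j = c then 1 else 0)"
          then have "A q j \<noteq> 0" using False by simp
          then have "j \<in> {1..n}" using supp by blast
          then show False using uq \<open>A q j \<noteq> 0\<close> gq False by auto
        qed
      qed
      then show ?thesis using 2 mk_q[OF V] by simp
    next
      case 3
      have "A (Suc q) j = (if j = \<sigma> q \<or> j = \<sigma> (Suc q) then 1 else if j = c then -1 else 0)"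
      proof -
        have "A r0 j \<noteq> 0 \<Longrightarrow> j = j1 \<or> j = c \<or> j = j3" using row0(7) supp[of r0 j] by auto
        then show ?thesis using row0 neg r0q \<sigma>_def by auto
      qed
      then show ?thesis using 3 mk_Sq[OF V] by simp
    next
      case 4
      have "r \<in> {1..n} - {r0}" using 4 r0q by simp
      then have uq: "\<forall>j'\<in>{1..n}. A r j' \<noteq> 0 \<longrightarrow> j' = g r" and gr: "A r (g r) = 1" using g by blast+
      have sr: "\<sigma> r = g r" using 4 unfolding \<sigma>_def by simp
      have "A r j = (if j = \<sigma> r then 1 else 0)"
      proof (cases "j = \<sigma> r")
        case True then show ?thesis using gr sr by simp
      next
        case False
        show ?thesis
        proof (rule ccontr)
          assume "A r j \<noteq> (if j = \<sigma> r then 1 else 0)"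
          then have "A r j \<noteq> 0" using False by simp
          then have "j \<in> {1..n}" using supp by blast
          then show False using uq \<open>A r j \<noteq> 0\<close> sr False by auto
        qed
      qed
      then show ?thesis using mk_oth[OF V 4] by simp
    qed
  qed
  then show ?thesis using V by blast
qed


context
  fixes n :: nat and \<sigma> :: "nat \<Rightarrow> nat" and q c :: nat
  assumes V: "valid n \<sigma> q c"
begin

lemma H_split3:
  "card {r \<in> {Suc q<..n}. \<sigma> r < \<sigma> (Suc q)} =
   card {r \<in> {Suc q<..n}. \<sigma> r < c} + 1 + card {r \<in> {Suc q<..n}. c < \<sigma> r \<and> \<sigma> r < \<sigma> (Suc q)}"
proof -
  obtain rc where rc: "rc \<in> {Suc (Suc q)..n}" "\<sigma> rc = c" using V_rc[OF V] by blast
  have rcn: "rc \<in> {1..n}" using rc by auto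
  let ?A = "{r \<in> {Suc q<..n}. \<sigma> r < c}"
  let ?B = "{r \<in> {Suc q<..n}. c < \<sigma> r \<and> \<sigma> r < \<sigma> (Suc q)}"
  have e: "{r \<in> {Suc q<..n}. \<sigma> r < \<sigma> (Suc q)} = ?A \<union> ({rc} \<union> ?B)"
  proof (intro equalityI subsetI)
    fix r assume r: "r \<in> {r \<in> {Suc q<..n}. \<sigma> r < \<sigma> (Suc q)}"
    show "r \<in> ?A \<union> ({rc} \<union> ?B)"
    proof (cases "\<sigma> r = c")
      case True
      have rn: "r \<in> {1..n}" using r by auto
      have "r = rc" using V_eq[OF V rn rcn] rc True by simp
      then show ?thesis by simp
    next
      case False then show ?thesis using r by auto
    qed
  next
    fix r assume "r \<in> ?A \<union> ({rc} \<union> ?B)"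
    then show "r \<in> {r \<in> {Suc q<..n}. \<sigma> r < \<sigma> (Suc q)}" using rc V_c[OF V] by auto
  qed
  have d1: "?A \<inter> ({rc} \<union> ?B) = {}" using rc by auto
  have d2: "rc \<notin> ?B" using rc by auto
  have "card (?A \<union> ({rc} \<union> ?B)) = card ?A + card ({rc} \<union> ?B)"
    by (rule card_Un_disjoint) (use d1 in auto)
  also have "card ({rc} \<union> ?B) = 1 + card ?B" using d2 by simp
  finally show ?thesis using e by simp
qed

lemma H_split2:
  "card {r \<in> {Suc q<..n}. \<sigma> r < c} =
   card {r \<in> {Suc q<..n}. \<sigma> r < \<sigma> q} + card {r \<in> {Suc q<..n}. \<sigma> q < \<sigma> r \<and> \<sigma> r < c}"
proof -
  let ?A = "{r \<in> {Suc q<..n}. \<sigma> r < \<sigma> q}"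
  let ?B = "{r \<in> {Suc q<..n}. \<sigma> q < \<sigma> r \<and> \<sigma> r < c}"
  have e: "{r \<in> {Suc q<..n}. \<sigma> r < c} = ?A \<union> ?B"
  proof (intro equalityI subsetI)
    fix r assume r: "r \<in> {r \<in> {Suc q<..n}. \<sigma> r < c}"
    then have "r \<in> {1..n}" "r \<noteq> q" by auto
    then have "\<sigma> r \<noteq> \<sigma> q" using V_eq[OF V _ V_qn(1)[OF V]] by simp
    then show "r \<in> ?A \<union> ?B" using r by auto
  next
    fix r assume "r \<in> ?A \<union> ?B"
    then show "r \<in> {r \<in> {Suc q<..n}. \<sigma> r < c}" using V_c[OF V] by auto
  qed
  have "card (?A \<union> ?B) = card ?A + card ?B"
    by (rule card_Un_disjoint) auto
  then show ?thesis using e by simp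
qed

lemma H_drop:
  assumes "\<not> P (\<sigma> (Suc q))"
  shows "{r \<in> {q<..n}. P (\<sigma> r)} = {r \<in> {Suc q<..n}. P (\<sigma> r)}"
  using assms by (auto simp: Suc_le_eq) (metis Suc_lessI)

lemma H_Lq: "Lcode n \<sigma> q = card {r \<in> {Suc q<..n}. \<sigma> r < \<sigma> q}"
  unfolding Lcode_def using H_drop[of "\<lambda>v. v < \<sigma> q"] V_c[OF V] by simp

lemma H_LSq: "Lcode n \<sigma> (Suc q) = card {r \<in> {Suc q<..n}. \<sigma> r < \<sigma> (Suc q)}"
  unfolding Lcode_def by simp

lemma H_ak: "ainv n (mk n \<sigma> q c) (n + 1 - q) = int (card {r \<in> {Suc q<..n}. \<sigma> r < c}) + 1"
  using mk_ainv_k[OF V] H_drop[of "\<lambda>v. v < c"] V_c[OF V] by simp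

lemma H_ell: "ell n (mk n \<sigma> q c) = int (card {r \<in> {Suc q<..n}. \<sigma> q < \<sigma> r \<and> \<sigma> r < c})"
  using mk_ell[OF V] H_drop[of "\<lambda>v. \<sigma> q < v \<and> v < c"] V_c[OF V] by simp

lemma H_card_le: "card {r \<in> {Suc q<..n}. \<sigma> r < \<sigma> (Suc q)} \<le> n - Suc q"
proof -
  have "card {r \<in> {Suc q<..n}. \<sigma> r < \<sigma> (Suc q)} \<le> card {Suc q<..n}"
    by (rule card_mono) auto
  then show ?thesis by simp
qed

end


definition Tab :: "nat \<Rightarrow> (nat \<times> (nat \<Rightarrow> int) \<times> int \<times> int) set" where
  "Tab n = {(k, a, b, \<beta>). 2 \<le> k \<and> k \<le> n \<and>
     (\<forall>i\<in>{1..n}. i \<noteq> k - 1 \<and> i \<noteq> k \<longrightarrow> 0 \<le> a i \<and> a i \<le> int i - 1) \<and>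
     0 \<le> a (k - 1) \<and> a (k - 1) < a k \<and> 0 \<le> b \<and> a k + b \<le> int k - 2 \<and> 0 \<le> \<beta> \<and>
     a (k - 1) + \<beta> < a k + b}"

lemma T1:
  assumes "(A, E) \<in> NN1 n"
  shows "(kidx n A, ainv n A, cval n A, E + ell n A) \<in> Tab n"
proof -
  have A1: "A \<in> ASM1 n" and neu: "neutral A" and E: "- ell n A \<le> E" "E \<le> cval n A"
    using assms unfolding NN1_def by auto
  obtain \<sigma> q c where V: "valid n \<sigma> q c" and A: "A = mk n \<sigma> q c" using asm_to_mk[OF A1 neu] by blast
  note q = V_q[OF V]
  let ?k = "n + 1 - q"
  have k: "kidx n A = ?k" using mk_kidx[OF V] A by simp
  have km1: "?k - 1 = n - q" by simp
  let ?c1 = "card {r \<in> {Suc q<..n}. \<sigma> r < \<sigma> q}"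
  let ?c2 = "card {r \<in> {Suc q<..n}. \<sigma> q < \<sigma> r \<and> \<sigma> r < c}"
  let ?c3 = "card {r \<in> {Suc q<..n}. c < \<sigma> r \<and> \<sigma> r < \<sigma> (Suc q)}"
  have ak1: "ainv n A (?k - 1) = int ?c1" using mk_ainv_k1[OF V] A km1 by simp
  have ak: "ainv n A ?k = int ?c1 + int ?c2 + 1" using H_ak[OF V] H_split2[OF V] A by simp
  have b: "cval n A = int ?c3" using mk_cval[OF V] A by simp
  have el: "ell n A = int ?c2" using H_ell[OF V] A by simp
  have le: "?c1 + ?c2 + 1 + ?c3 \<le> n - Suc q"
    using H_card_le[OF V] H_split3[OF V] H_split2[OF V] by simp
  have oth: "\<forall>i\<in>{1..n}. i \<noteq> ?k - 1 \<and> i \<noteq> ?k \<longrightarrow> 0 \<le> ainv n A i \<and> ainv n A i \<le> int i - 1"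
  proof (intro ballI impI)
    fix i assume i: "i \<in> {1..n}" "i \<noteq> ?k - 1 \<and> i \<noteq> ?k"
    have ne: "n + 1 - i \<noteq> q" "n + 1 - i \<noteq> Suc q" using i q by auto
    have "ainv n A i = int (Lcode n \<sigma> (n + 1 - i))" using mk_ainv_oth[OF V i(1) ne] A by simp
    moreover have "Lcode n \<sigma> (n + 1 - i) \<le> i - 1"
    proof -
      have "Lcode n \<sigma> (n + 1 - i) \<le> card {n + 1 - i<..n}" unfolding Lcode_def by (rule card_mono) auto
      then show ?thesis using i by simp
    qed
    ultimately show "0 \<le> ainv n A i \<and> ainv n A i \<le> int i - 1" using i by auto
  qed
  show ?thesis unfolding Tab_def k
    using oth ak1 ak b el le E q by auto
qed

lemma mk_cong:
  assumes V: "valid n \<sigma> q c" and V': "valid n \<sigma>' q c" and e: "\<forall>r\<in>{1..n}. \<sigma> r = \<sigma>' r"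
  shows "mk n \<sigma> q c = mk n \<sigma>' q c"
proof (intro ext)
  fix r j
  have qq: "\<sigma> q = \<sigma>' q" "\<sigma> (Suc q) = \<sigma>' (Suc q)" using e V_qn[OF V] by auto
  consider "r \<notin> {1..n}" | "r = q" | "r = Suc q" | "r \<in> {1..n}" "r \<noteq> q" "r \<noteq> Suc q" by blast
  then show "mk n \<sigma> q c r j = mk n \<sigma>' q c r j"
  proof cases
    case 1 then show ?thesis using mk_out[OF V 1] mk_out[OF V' 1] by simp
  next
    case 2 then show ?thesis using mk_q[OF V] mk_q[OF V'] by simp
  next
    case 3 then show ?thesis using mk_Sq[OF V] mk_Sq[OF V'] qq by simp
  next
    case 4 then show ?thesis using mk_oth[OF V 4] mk_oth[OF V' 4] e by simp
  qed
qed

lemma T2: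
  assumes N: "(A, E) \<in> NN1 n" and N': "(A', E') \<in> NN1 n"
    and k: "kidx n A = kidx n A'" and a: "\<forall>i\<in>{1..n}. ainv n A i = ainv n A' i"
    and b: "cval n A = cval n A'" and be: "E + ell n A = E' + ell n A'"
  shows "A = A' \<and> E = E'"
proof -
  have A1: "A \<in> ASM1 n" "neutral A" "A' \<in> ASM1 n" "neutral A'"
    using N N' unfolding NN1_def by auto
  obtain \<sigma> q c where V: "valid n \<sigma> q c" and A: "A = mk n \<sigma> q c" using asm_to_mk A1 by blast
  obtain \<sigma>' q' c' where V': "valid n \<sigma>' q' c'" and A': "A' = mk n \<sigma>' q' c'" using asm_to_mk A1 by blast
  have "n + 1 - q = n + 1 - q'" using k mk_kidx[OF V] mk_kidx[OF V'] A A' by simp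
  then have qq: "q = q'" using V_q[OF V] V_q[OF V'] by simp
  note q = V_q[OF V]
  have V'': "valid n \<sigma>' q c'" using V' qq by simp
  have A'': "A' = mk n \<sigma>' q c'" using A' qq by simp
  have i1: "n - q \<in> {1..n}" "n + 1 - q \<in> {1..n}" using q by auto
  have e1: "ainv n A (n - q) = ainv n A' (n - q)" using a i1 by blast
  have ak1: "card {r \<in> {Suc q<..n}. \<sigma> r < \<sigma> q} = card {r \<in> {Suc q<..n}. \<sigma>' r < \<sigma>' q}"
    using e1 unfolding A A'' mk_ainv_k1[OF V] mk_ainv_k1[OF V''] by simp
  have e2: "ainv n A (n + 1 - q) = ainv n A' (n + 1 - q)" using a i1 by blast
  have ak: "card {r \<in> {Suc q<..n}. \<sigma> r < c} = card {r \<in> {Suc q<..n}. \<sigma>' r < c'}"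
    using e2 unfolding A A'' H_ak[OF V] H_ak[OF V''] by simp
  have bb: "card {r \<in> {Suc q<..n}. c < \<sigma> r \<and> \<sigma> r < \<sigma> (Suc q)} = card {r \<in> {Suc q<..n}. c' < \<sigma>' r \<and> \<sigma>' r < \<sigma>' (Suc q)}"
    using b unfolding A A'' mk_cval[OF V] mk_cval[OF V''] by simp
  have L: "\<forall>r\<in>{1..n}. Lcode n \<sigma> r = Lcode n \<sigma>' r"
  proof
    fix r assume r: "r \<in> {1..n}"
    consider "r = q" | "r = Suc q" | "r \<noteq> q" "r \<noteq> Suc q" by blast
    then show "Lcode n \<sigma> r = Lcode n \<sigma>' r"
    proof cases
      case 1 then show ?thesis using H_Lq[OF V] H_Lq[OF V'] ak1 qq by simp
    next
      case 2 then show ?thesis using H_LSq[OF V] H_LSq[OF V'] H_split3[OF V] H_split3[OF V'] ak bb qq by simp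
    next
      case 3
      let ?i = "n + 1 - r"
      have i: "?i \<in> {1..n}" using r by auto
      have ne: "n + 1 - ?i \<noteq> q" "n + 1 - ?i \<noteq> Suc q" using 3 r by auto
      have ne': "n + 1 - ?i \<noteq> q'" "n + 1 - ?i \<noteq> Suc q'" using ne qq by auto
      have "ainv n A ?i = ainv n A' ?i" using a i by blast
      then have "int (Lcode n \<sigma> (n + 1 - ?i)) = int (Lcode n \<sigma>' (n + 1 - ?i))"
        unfolding A A' mk_ainv_oth[OF V i ne] mk_ainv_oth[OF V' i ne'] .
      then show ?thesis using r by simp
    qed
  qed
  have ss: "\<forall>r\<in>{1..n}. \<sigma> r = \<sigma>' r" using Lcode_uniq[OF V_bij[OF V] V_bij[OF V'] L] .
  have cc: "c = c'"
  proof (rule ccontr)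
    assume ne: "c \<noteq> c'"
    have ak': "card {r \<in> {Suc q<..n}. \<sigma> r < c} = card {r \<in> {Suc q<..n}. \<sigma> r < c'}"
    proof -
      have "{r \<in> {Suc q<..n}. \<sigma>' r < c'} = {r \<in> {Suc q<..n}. \<sigma> r < c'}" using ss by auto
      then show ?thesis using ak by simp
    qed
    obtain rc where rc: "rc \<in> {Suc (Suc q)..n}" "\<sigma> rc = c" using V_rc[OF V] by blast
    obtain rc' where rc': "rc' \<in> {Suc (Suc q)..n}" "\<sigma>' rc' = c'" using V_rc[OF V'] qq by blast
    have "\<sigma> rc' = c'" using rc' ss by auto
    show False
    proof (cases "c < c'")
      case True
      have "{r \<in> {Suc q<..n}. \<sigma> r < c} \<subseteq> {r \<in> {Suc q<..n}. \<sigma> r < c'}"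
        using True by auto
      moreover have "rc \<in> {r \<in> {Suc q<..n}. \<sigma> r < c'}" "rc \<notin> {r \<in> {Suc q<..n}. \<sigma> r < c}"
        using True rc by auto
      ultimately have "{r \<in> {Suc q<..n}. \<sigma> r < c} \<subset> {r \<in> {Suc q<..n}. \<sigma> r < c'}" by blast
      then have "card {r \<in> {Suc q<..n}. \<sigma> r < c} < card {r \<in> {Suc q<..n}. \<sigma> r < c'}"
        by (intro psubset_card_mono) auto
      then show False using ak' by simp
    next
      case False
      then have "c' < c" using ne by simp
      have "{r \<in> {Suc q<..n}. \<sigma> r < c'} \<subseteq> {r \<in> {Suc q<..n}. \<sigma> r < c}"
        using \<open>c' < c\<close> by auto
      moreover have "rc' \<in> {r \<in> {Suc q<..n}. \<sigma> r < c}" "rc' \<notin> {r \<in> {Suc q<..n}. \<sigma> r < c'}"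
        using \<open>c' < c\<close> rc' \<open>\<sigma> rc' = c'\<close> by auto
      ultimately have "{r \<in> {Suc q<..n}. \<sigma> r < c'} \<subset> {r \<in> {Suc q<..n}. \<sigma> r < c}" by blast
      then have "card {r \<in> {Suc q<..n}. \<sigma> r < c'} < card {r \<in> {Suc q<..n}. \<sigma> r < c}"
        by (intro psubset_card_mono) auto
      then show False using ak' by simp
    qed
  qed
  have V2: "valid n \<sigma>' q c" using V' qq cc by simp
  have AA: "A = A'" using mk_cong[OF V V2 ss] A A' qq cc by simp
  then show ?thesis using be by simp
qed


lemma T3:
  assumes t: "(k, a, b, \<beta>) \<in> Tab n"
  shows "\<exists>A E. (A, E) \<in> NN1 n \<and> kidx n A = k \<and> (\<forall>i\<in>{1..n}. ainv n A i = a i) \<and>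
           cval n A = b \<and> E + ell n A = \<beta>"
proof -
  have k: "2 \<le> k" "k \<le> n" and ao: "\<forall>i\<in>{1..n}. i \<noteq> k - 1 \<and> i \<noteq> k \<longrightarrow> 0 \<le> a i \<and> a i \<le> int i - 1"
    and a1: "0 \<le> a (k - 1)" "a (k - 1) < a k" and b: "0 \<le> b" "a k + b \<le> int k - 2"
    and be: "0 \<le> \<beta>" "a (k - 1) + \<beta> < a k + b"
    using t unfolding Tab_def by auto
  define q where "q = n + 1 - k"
  have k3: "3 \<le> k" using a1 b by linarith
  have q: "1 \<le> q" "Suc (Suc q) \<le> n" "k = n + 1 - q" "k - 1 = n - q" using k k3 unfolding q_def by auto
  define L where "L r = (if r = q then nat (a (k - 1)) else if r = Suc q then nat (a k + b)
      else nat (a (n + 1 - r)))" for r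
  have Lb: "\<forall>r\<in>{1..n}. L r \<le> n - r"
  proof
    fix r assume r: "r \<in> {1..n}"
    consider "r = q" | "r = Suc q" | "r \<noteq> q" "r \<noteq> Suc q" by blast
    then show "L r \<le> n - r"
    proof cases
      case 1 then show ?thesis using a1 b q unfolding L_def by auto
    next
      case 2 then show ?thesis using a1 b q unfolding L_def by auto
    next
      case 3
      let ?i = "n + 1 - r"
      have "?i \<in> {1..n}" "?i \<noteq> k - 1" "?i \<noteq> k" using r 3 q by auto
      then have "0 \<le> a ?i \<and> a ?i \<le> int ?i - 1" using ao by blast
      then show ?thesis using 3 r unfolding L_def by auto
    qed
  qed
  obtain \<sigma> where bij: "bij_betw \<sigma> {1..n} {1..n}" and Lc: "\<forall>r\<in>{1..n}. Lcode n \<sigma> r = L r"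
    using Lcode_exist[OF Lb] by blast
  have inj: "inj_on \<sigma> {1..n}" using bij bij_betw_def by blast
  have img: "\<And>r. r \<in> {1..n} \<Longrightarrow> \<sigma> r \<in> {1..n}" using bij bij_betwE by blast
  have qn: "q \<in> {1..n}" "Suc q \<in> {1..n}" using q by auto
  have Lq: "int (Lcode n \<sigma> q) = a (k - 1)"
  proof -
    have "Lcode n \<sigma> q = L q" using Lc qn by blast
    also have "L q = nat (a (k - 1))" unfolding L_def by simp
    finally show ?thesis using a1 by simp
  qed
  have LSq: "int (Lcode n \<sigma> (Suc q)) = a k + b"
  proof -
    have "Lcode n \<sigma> (Suc q) = L (Suc q)" using Lc qn by blast
    also have "L (Suc q) = nat (a k + b)" unfolding L_def by simp
    finally show ?thesis using a1 b by simp
  qed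
  let ?R = "{Suc q<..n}"
  let ?V = "\<sigma> ` ?R"
  have R: "?R \<subseteq> {1..n}" by auto
  have injR: "inj_on \<sigma> ?R" by (rule inj_on_subset[OF inj R])
  have cardV: "card ?V = n - Suc q" using injR by (simp add: card_image)
  have cnt: "\<And>P. card {r \<in> ?R. P (\<sigma> r)} = card {v \<in> ?V. P v}"
  proof -
    fix P
    have "{v \<in> ?V. P v} = \<sigma> ` {r \<in> ?R. P (\<sigma> r)}" by auto
    moreover have "inj_on \<sigma> {r \<in> ?R. P (\<sigma> r)}" by (rule inj_on_subset[OF injR]) auto
    ultimately show "card {r \<in> ?R. P (\<sigma> r)} = card {v \<in> ?V. P v}" by (simp add: card_image)
  qed
  have qV: "\<sigma> q \<notin> ?V" "\<sigma> (Suc q) \<notin> ?V"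
  proof -
    show "\<sigma> q \<notin> ?V"
    proof
      assume "\<sigma> q \<in> ?V"
      then obtain r where r: "r \<in> ?R" "\<sigma> r = \<sigma> q" by auto
      then have "r = q" using inj qn R by (meson inj_onD subsetD)
      then show False using r by simp
    qed
    show "\<sigma> (Suc q) \<notin> ?V"
    proof
      assume "\<sigma> (Suc q) \<in> ?V"
      then obtain r where r: "r \<in> ?R" "\<sigma> r = \<sigma> (Suc q)" by auto
      then have "r = Suc q" using inj qn R by (meson inj_onD subsetD)
      then show False using r by simp
    qed
  qed
  have ord: "\<sigma> q < \<sigma> (Suc q)"
  proof (rule ccontr)
    assume "\<not> \<sigma> q < \<sigma> (Suc q)"
    moreover have "\<sigma> q \<noteq> \<sigma> (Suc q)" using inj qn by (metis inj_onD n_not_Suc_n)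
    ultimately have lt: "\<sigma> (Suc q) < \<sigma> q" by simp
    have "insert (Suc q) {r \<in> ?R. \<sigma> r < \<sigma> (Suc q)} \<subseteq> {r \<in> {q<..n}. \<sigma> r < \<sigma> q}"
      using lt q by auto
    then have "card (insert (Suc q) {r \<in> ?R. \<sigma> r < \<sigma> (Suc q)}) \<le> card {r \<in> {q<..n}. \<sigma> r < \<sigma> q}"
      by (intro card_mono) auto
    then have "Lcode n \<sigma> (Suc q) + 1 \<le> Lcode n \<sigma> q" unfolding Lcode_def by simp
    then show False using Lq LSq a1 b by linarith
  qed
  have LqV: "int (card {v \<in> ?V. v < \<sigma> q}) = a (k - 1)"
  proof -
    have "{r \<in> {q<..n}. \<sigma> r < \<sigma> q} = {r \<in> ?R. \<sigma> r < \<sigma> q}"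
    proof (intro equalityI subsetI)
      fix x assume x: "x \<in> {r \<in> {q<..n}. \<sigma> r < \<sigma> q}"
      then have "x \<noteq> Suc q" using ord by auto
      then show "x \<in> {r \<in> ?R. \<sigma> r < \<sigma> q}" using x by auto
    qed auto
    then show ?thesis using Lq cnt[of "\<lambda>v. v < \<sigma> q"] unfolding Lcode_def by simp
  qed
  have LSqV: "int (card {v \<in> ?V. v < \<sigma> (Suc q)}) = a k + b"
    using LSq cnt[of "\<lambda>v. v < \<sigma> (Suc q)"] unfolding Lcode_def by simp
  define m where "m = nat (a k) - 1"
  have m2: "int m = a k - 1" using a1 unfolding m_def by auto
  have "int (n - Suc q) = int n - int q - 1" using q by auto
  moreover have "int k = int n + 1 - int q" using q by auto
  ultimately have "int m < int (n - Suc q)" using m2 b a1 by linarith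
  then have m: "m < card ?V" "int m = a k - 1" using cardV m2 by auto
  define c where "c = kth ?V m"
  have cV: "c \<in> ?V" using kth_in[of ?V m] m unfolding c_def by simp
  have cm: "card {v \<in> ?V. v < c} = m" using card_less_kth[of ?V m] m unfolding c_def by simp
  have qc: "\<sigma> q < c"
  proof (rule ccontr)
    assume "\<not> \<sigma> q < c"
    then have lt: "c < \<sigma> q" using cV qV by (metis linorder_neqE_nat)
    have "{v \<in> ?V. v < c} \<subset> {v \<in> ?V. v < \<sigma> q}" using lt cV by auto
    then have "card {v \<in> ?V. v < c} < card {v \<in> ?V. v < \<sigma> q}" by (intro psubset_card_mono) auto
    then show False using cm m LqV a1 by linarith
  qed
  have cSq: "c < \<sigma> (Suc q)"
  proof (rule ccontr)
    assume "\<not> c < \<sigma> (Suc q)"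
    then have lt: "\<sigma> (Suc q) < c" using cV qV by (metis linorder_neqE_nat)
    have "{v \<in> ?V. v < \<sigma> (Suc q)} \<subseteq> {v \<in> ?V. v < c}" using lt by auto
    then have "card {v \<in> ?V. v < \<sigma> (Suc q)} \<le> card {v \<in> ?V. v < c}" by (intro card_mono) auto
    then show False using cm m LSqV b by linarith
  qed
  have V: "valid n \<sigma> q c"
    unfolding valid_def
  proof (intro conjI)
    show "bij_betw \<sigma> {1..n} {1..n}" by (rule bij)
    show "1 \<le> q" using q by simp
    have "{Suc q<..n} = {Suc (Suc q)..n}" by auto
    then show "c \<in> \<sigma> ` {Suc (Suc q)..n}" using cV by simp
  qed (use qc cSq in auto)
  define A where "A = mk n \<sigma> q c"
  define E where "E = \<beta> - ell n A"
  have ak: "ainv n A k = a k"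
  proof -
    have "ainv n A k = int (card {r \<in> ?R. \<sigma> r < c}) + 1" using H_ak[OF V] q unfolding A_def by simp
    then show ?thesis using cnt[of "\<lambda>v. v < c"] cm m by simp
  qed
  have ak1: "ainv n A (k - 1) = a (k - 1)"
    using mk_ainv_k1[OF V] q LqV cnt[of "\<lambda>v. v < \<sigma> q"] unfolding A_def by simp
  have aall: "\<forall>i\<in>{1..n}. ainv n A i = a i"
  proof
    fix i assume i: "i \<in> {1..n}"
    consider "i = k" | "i = k - 1" | "i \<noteq> k" "i \<noteq> k - 1" by blast
    then show "ainv n A i = a i"
    proof cases
      case 1 then show ?thesis using ak by simp
    next
      case 2 then show ?thesis using ak1 by simp
    next
      case 3
      have ne: "n + 1 - i \<noteq> q" "n + 1 - i \<noteq> Suc q" using 3 i q by auto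
      have r: "n + 1 - i \<in> {1..n}" using i by auto
      have "ainv n A i = int (Lcode n \<sigma> (n + 1 - i))" using mk_ainv_oth[OF V i ne] unfolding A_def .
      also have "... = int (L (n + 1 - i))" using Lc r by simp
      also have "... = a i" using ne ao i 3 unfolding L_def by auto
      finally show ?thesis .
    qed
  qed
  have s3: "card {r \<in> ?R. \<sigma> r < \<sigma> (Suc q)} = card {r \<in> ?R. \<sigma> r < c} + 1 + card {r \<in> ?R. c < \<sigma> r \<and> \<sigma> r < \<sigma> (Suc q)}"
    using H_split3[OF V] .
  have cvalA: "cval n A = b"
  proof -
    have "cval n A = int (card {r \<in> ?R. c < \<sigma> r \<and> \<sigma> r < \<sigma> (Suc q)})" using mk_cval[OF V] unfolding A_def .
    then show ?thesis using s3 LSqV cnt[of "\<lambda>v. v < \<sigma> (Suc q)"] cnt[of "\<lambda>v. v < c"] cm m by simp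
  qed
  have ellA: "ell n A = a k - 1 - a (k - 1)"
  proof -
    have "ell n A = int (card {r \<in> ?R. \<sigma> q < \<sigma> r \<and> \<sigma> r < c})" using H_ell[OF V] unfolding A_def .
    moreover have "card {r \<in> ?R. \<sigma> r < c} = card {r \<in> ?R. \<sigma> r < \<sigma> q} + card {r \<in> ?R. \<sigma> q < \<sigma> r \<and> \<sigma> r < c}"
      using H_split2[OF V] .
    ultimately show ?thesis using cnt[of "\<lambda>v. v < \<sigma> q"] cnt[of "\<lambda>v. v < c"] cm m LqV by simp
  qed
  have NN: "(A, E) \<in> NN1 n"
    unfolding NN1_def using mk_ASM1[OF V] mk_neutral[OF V] ellA cvalA be b a1 unfolding A_def E_def
    by auto
  have kA: "kidx n A = k" using mk_kidx[OF V] q unfolding A_def by simp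
  have EE: "E + ell n A = \<beta>" unfolding E_def by simp
  show ?thesis using NN aall cvalA kA EE by blast
qed


definition endp :: "int \<times> int \<Rightarrow> step list \<Rightarrow> int \<times> int" where
  "endp p w = last (verts p w)"

abbreviation cnt :: "step \<Rightarrow> step list \<Rightarrow> nat" where
  "cnt X w \<equiv> length (filter (\<lambda>s. s = X) w)"

lemma verts_ne[simp]: "verts p w \<noteq> []"
  by (induction w arbitrary: p) auto

lemma hd_verts[simp]: "hd (verts p w) = p"
  by (cases w) auto

lemma p_in_verts: "p \<in> set (verts p w)"
  by (cases w) auto

lemma endp_Nil[simp]: "endp p [] = p" unfolding endp_def by simp
lemma endp_Cons[simp]: "endp p (s # w) = endp (fst p + fst (disp s), snd p + snd (disp s)) w"
  unfolding endp_def by simp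

lemma set_verts_app: "set (verts p (u @ w)) = set (verts p u) \<union> set (verts (endp p u) w)"
proof (induction u arbitrary: p)
  case Nil then show ?case using p_in_verts[of p w] by auto
next
  case (Cons s u) then show ?case by auto
qed

lemma endp_app: "endp p (u @ w) = endp (endp p u) w"
  by (induction u arbitrary: p) auto

lemma endp_formula:
  "endp (x, y) w = (x + int (cnt StepE w + cnt StepF w + cnt StepN w), y - int (cnt StepS w) + int (cnt StepN w))"
proof (induction w arbitrary: x y)
  case Nil then show ?case by simp
next
  case (Cons s w) then show ?case by (cases s) auto
qed

lemma seg_verts:
  assumes "X = StepE \<or> X = StepF"
  shows "set (verts (x, y) (replicate m X)) = {(x', y'). y' = y \<and> x \<le> x' \<and> x' \<le> x + int m}"
  using assms
proof (induction m arbitrary: x)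
  case 0 then show ?case by auto
next
  case (Suc m)
  have "set (verts (x, y) (replicate (Suc m) X)) = insert (x, y) (set (verts (x + 1, y) (replicate m X)))"
    using Suc.prems by auto
  also have "... = insert (x, y) {(x', y'). y' = y \<and> x + 1 \<le> x' \<and> x' \<le> x + 1 + int m}"
    using Suc by simp
  also have "... = {(x', y'). y' = y \<and> x \<le> x' \<and> x' \<le> x + int (Suc m)}" by auto
  finally show ?case .
qed

lemma seg_endp:
  assumes "X = StepE \<or> X = StepF"
  shows "endp (x, y) (replicate m X) = (x + int m, y)"
  using assms by (induction m arbitrary: x) auto

lemma verts_S: "set (verts (x, y) [StepS]) = {(x, y), (x, y - 1)}" by auto
lemma verts_N: "set (verts (x, y) [StepN]) = {(x, y), (x + 1, y + 1)}" by auto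
lemma endp_S: "endp (x, y) [StepS] = (x, y - 1)" by simp
lemma endp_N: "endp (x, y) [StepN] = (x + 1, y + 1)" by simp

lemma left_right:
  assumes "set L \<subseteq> {StepS, StepE}" "set R \<subseteq> {StepF, StepN}"
  shows "left_part (L @ R) = L" "right_part (L @ R) = R"
proof -
  have "takeWhile (\<lambda>s. s \<in> {StepS, StepE}) R = []"
    using assms(2) by (cases R) auto
  moreover have "takeWhile (\<lambda>s. s \<in> {StepS, StepE}) (L @ R) = L @ takeWhile (\<lambda>s. s \<in> {StepS, StepE}) R"
    by (rule takeWhile_append2) (use assms(1) in auto)
  ultimately show "left_part (L @ R) = L" unfolding left_part_def by simp
  have "dropWhile (\<lambda>s. s \<in> {StepS, StepE}) R = R"
    using assms(2) by (cases R) auto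
  moreover have "dropWhile (\<lambda>s. s \<in> {StepS, StepE}) (L @ R) = dropWhile (\<lambda>s. s \<in> {StepS, StepE}) R"
    by (rule dropWhile_append2) (use assms(1) in auto)
  ultimately show "right_part (L @ R) = R" unfolding right_part_def by simp
qed

lemma lv_rv:
  assumes "set L \<subseteq> {StepS, StepE}" "set R \<subseteq> {StepF, StepN}"
  shows "left_verts p (L @ R) = set (verts p L)" "right_verts p (L @ R) = set (verts (endp p L) R)"
  unfolding left_verts_def right_verts_def left_right[OF assms] endp_def by simp_all


definition row :: "int \<Rightarrow> int \<Rightarrow> int \<Rightarrow> (int \<times> int) set" where
  "row y x0 x1 = {(x, y'). y' = y \<and> x0 \<le> x \<and> x \<le> x1}"

lemma row_mem[simp]: "(x, y') \<in> row y x0 x1 \<longleftrightarrow> y' = y \<and> x0 \<le> x \<and> x \<le> x1"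
  unfolding row_def by simp

abbreviation "Es m \<equiv> replicate (nat m) StepE"
abbreviation "Fs m \<equiv> replicate (nat m) StepF"

lemma seg_E: "0 \<le> m \<Longrightarrow> set (verts (x, y) (Es m)) = row y x (x + m)"
  using seg_verts[of StepE x y "nat m"] unfolding row_def by simp
lemma seg_F: "0 \<le> m \<Longrightarrow> set (verts (x, y) (Fs m)) = row y x (x + m)"
  using seg_verts[of StepF x y "nat m"] unfolding row_def by simp
lemma endp_E: "0 \<le> m \<Longrightarrow> endp (x, y) (Es m) = (x + m, y)"
  using seg_endp[of StepE x y "nat m"] by simp
lemma endp_F: "0 \<le> m \<Longrightarrow> endp (x, y) (Fs m) = (x + m, y)"
  using seg_endp[of StepF x y "nat m"] by simp

lemma path_ord:
  assumes "0 \<le> a" "0 \<le> r"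
  defines "w \<equiv> Es a @ Fs r"
  shows "left_verts (0, y) w = row y 0 a" "right_verts (0, y) w = row y a (a + r)"
    "set (verts (0, y) w) = row y 0 (a + r)" "endp (0, y) w = (a + r, y)" "cnt StepN w = 0"
    "cnt StepS w = 0"
    "\<exists>L R. w = L @ R \<and> set L \<subseteq> {StepS, StepE} \<and> set R \<subseteq> {StepF, StepN}"
proof -
  have s: "set (Es a) \<subseteq> {StepS, StepE}" "set (Fs r) \<subseteq> {StepF, StepN}" by auto
  show "left_verts (0, y) w = row y 0 a" unfolding w_def lv_rv[OF s] seg_E[OF assms(1)] by simp
  show "right_verts (0, y) w = row y a (a + r)" unfolding w_def lv_rv[OF s] endp_E[OF assms(1)] seg_F[OF assms(2)] by simp
  show "set (verts (0, y) w) = row y 0 (a + r)"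
    unfolding w_def set_verts_app endp_E[OF assms(1)] seg_E[OF assms(1)] seg_F[OF assms(2)]
    using assms by (auto simp: row_def)
  show "endp (0, y) w = (a + r, y)" unfolding w_def endp_app endp_E[OF assms(1)] endp_F[OF assms(2)] by simp
  show "cnt StepN w = 0" "cnt StepS w = 0" unfolding w_def by auto
  show "\<exists>L R. w = L @ R \<and> set L \<subseteq> {StepS, StepE} \<and> set R \<subseteq> {StepF, StepN}"
    unfolding w_def using s by blast
qed

lemma path_km1:
  assumes "0 \<le> a" "0 \<le> \<beta>" "0 \<le> g"
  defines "w \<equiv> Es a @ Fs \<beta> @ [StepN] @ Fs g"
  shows "left_verts (0, y) w = row y 0 a"
    "right_verts (0, y) w = row y a (a + \<beta>) \<union> row (y + 1) (a + \<beta> + 1) (a + \<beta> + 1 + g)"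
    "set (verts (0, y) w) = row y 0 (a + \<beta>) \<union> row (y + 1) (a + \<beta> + 1) (a + \<beta> + 1 + g)"
    "endp (0, y) w = (a + \<beta> + 1 + g, y + 1)" "cnt StepN w = 1" "cnt StepS w = 0"
    "\<exists>L R. w = L @ R \<and> set L \<subseteq> {StepS, StepE} \<and> set R \<subseteq> {StepF, StepN}"
proof -
  have s: "set (Es a) \<subseteq> {StepS, StepE}" "set (Fs \<beta> @ [StepN] @ Fs g) \<subseteq> {StepF, StepN}" by auto
  have R: "set (verts (a, y) (Fs \<beta> @ [StepN] @ Fs g)) = row y a (a + \<beta>) \<union> row (y + 1) (a + \<beta> + 1) (a + \<beta> + 1 + g)"
    unfolding set_verts_app endp_app endp_F[OF assms(2)] seg_F[OF assms(2)] verts_N endp_N seg_F[OF assms(3)]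
    using assms by (auto simp: row_def)
  show "left_verts (0, y) w = row y 0 a" unfolding w_def lv_rv[OF s] seg_E[OF assms(1)] by simp
  have e0: "endp (0, y) (Es a) = (a, y)" using endp_E[OF assms(1), of 0 y] by simp
  show "right_verts (0, y) w = row y a (a + \<beta>) \<union> row (y + 1) (a + \<beta> + 1) (a + \<beta> + 1 + g)"
    unfolding w_def lv_rv[OF s] e0 using R by simp
  show "set (verts (0, y) w) = row y 0 (a + \<beta>) \<union> row (y + 1) (a + \<beta> + 1) (a + \<beta> + 1 + g)"
    unfolding w_def set_verts_app[of _ "Es a"] e0 seg_E[OF assms(1)] R
    using assms by (auto simp: row_def)
  show "endp (0, y) w = (a + \<beta> + 1 + g, y + 1)"
    unfolding w_def endp_app endp_E[OF assms(1)] endp_F[OF assms(2)] endp_N endp_F[OF assms(3)] by simp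
  show "cnt StepN w = 1" "cnt StepS w = 0" unfolding w_def by auto
  show "\<exists>L R. w = L @ R \<and> set L \<subseteq> {StepS, StepE} \<and> set R \<subseteq> {StepF, StepN}"
    unfolding w_def using s by blast
qed

lemma path_k:
  assumes "0 \<le> a" "0 \<le> b" "0 \<le> d"
  defines "w \<equiv> Es a @ [StepS] @ Es b @ Fs d"
  shows "left_verts (0, y) w = row y 0 a \<union> row (y - 1) a (a + b)"
    "right_verts (0, y) w = row (y - 1) (a + b) (a + b + d)"
    "set (verts (0, y) w) = row y 0 a \<union> row (y - 1) a (a + b + d)"
    "endp (0, y) w = (a + b + d, y - 1)" "cnt StepN w = 0" "cnt StepS w = 1"
    "\<exists>L R. w = L @ R \<and> set L \<subseteq> {StepS, StepE} \<and> set R \<subseteq> {StepF, StepN}"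
proof -
  have s: "set (Es a @ [StepS] @ Es b) \<subseteq> {StepS, StepE}" "set (Fs d) \<subseteq> {StepF, StepN}" by auto
  have ww: "w = (Es a @ [StepS] @ Es b) @ Fs d" unfolding w_def by simp
  have L: "set (verts (0, y) (Es a @ [StepS] @ Es b)) = row y 0 a \<union> row (y - 1) a (a + b)"
    unfolding set_verts_app endp_app endp_E[OF assms(1)] seg_E[OF assms(1)] verts_S endp_S seg_E[OF assms(2)]
    using assms by (auto simp: row_def)
  have Le: "endp (0, y) (Es a @ [StepS] @ Es b) = (a + b, y - 1)"
    unfolding endp_app endp_E[OF assms(1)] endp_S endp_E[OF assms(2)] by simp
  show "left_verts (0, y) w = row y 0 a \<union> row (y - 1) a (a + b)" unfolding ww lv_rv[OF s] L by simp
  show "right_verts (0, y) w = row (y - 1) (a + b) (a + b + d)"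
    unfolding ww lv_rv[OF s] Le seg_F[OF assms(3)] by simp
  show "set (verts (0, y) w) = row y 0 a \<union> row (y - 1) a (a + b + d)"
    unfolding ww set_verts_app[of _ "Es a @ [StepS] @ Es b"] L Le seg_F[OF assms(3)]
    using assms by (auto simp: row_def)
  show "endp (0, y) w = (a + b + d, y - 1)" unfolding ww endp_app[of _ "Es a @ [StepS] @ Es b"] Le endp_F[OF assms(3)] by simp
  show "cnt StepN w = 0" "cnt StepS w = 1" unfolding w_def by auto
  show "\<exists>L R. w = L @ R \<and> set L \<subseteq> {StepS, StepE} \<and> set R \<subseteq> {StepF, StepN}"
    unfolding ww using s by blast
qed


definition pth :: "nat \<Rightarrow> (nat \<Rightarrow> int) \<Rightarrow> int \<Rightarrow> int \<Rightarrow> nat \<Rightarrow> step list" where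
  "pth k a b \<beta> i = (if i = k - 1 then Es (a i) @ Fs \<beta> @ [StepN] @ Fs (int k - 2 - a i - \<beta>)
     else if i = k then Es (a i) @ [StepS] @ Es b @ Fs (int k - 2 - a i - b)
     else Es (a i) @ Fs (int i - 1 - a i))"

definition Psi :: "nat \<Rightarrow> nat \<Rightarrow> (nat \<Rightarrow> int) \<Rightarrow> int \<Rightarrow> int \<Rightarrow> step list list" where
  "Psi n k a b \<beta> = map (pth k a b \<beta>) [1..<n+1]"

lemma Phi_Psi: "Phi n (A, E) = Psi n (kidx n A) (ainv n A) (cval n A) (E + ell n A)"
  unfolding Phi_def Psi_def pth_def Let_def by simp

lemma Psi_nth: "i \<in> {1..n} \<Longrightarrow> Psi n k a b \<beta> ! (i - 1) = pth k a b \<beta> i"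
proof -
  assume i: "i \<in> {1..n}"
  then have l: "i - 1 < length [1..<n+1]" by auto
  have "[1..<n+1] ! (i - 1) = i" using i by (auto simp del: upt_Suc)
  then show ?thesis unfolding Psi_def nth_map[OF l] by simp
qed

lemma Psi_len[simp]: "length (Psi n k a b \<beta>) = n"
  unfolding Psi_def by simp

lemma Psi_cong: "\<forall>i\<in>{1..n}. a i = a' i \<Longrightarrow> Psi n k a b \<beta> = Psi n k a' b \<beta>"
  unfolding Psi_def pth_def by (intro map_cong) auto

definition swp :: "nat \<Rightarrow> nat \<Rightarrow> nat" where
  "swp k i = (if i = k - 1 then k else if i = k then k - 1 else i)"

lemma swp_bij:
  assumes "2 \<le> k" "k \<le> n"
  shows "bij_betw (swp k) {1..n} {1..n}"
proof (rule bij_betw_byWitness[where f' = "swp k"])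
  show "\<forall>i\<in>{1..n}. swp k (swp k i) = i" unfolding swp_def using assms by auto
  show "\<forall>i\<in>{1..n}. swp k (swp k i) = i" unfolding swp_def using assms by auto
  show "swp k ` {1..n} \<subseteq> {1..n}" unfolding swp_def using assms by auto
  show "swp k ` {1..n} \<subseteq> {1..n}" unfolding swp_def using assms by auto
qed

context
  fixes n k :: nat and a :: "nat \<Rightarrow> int" and b \<beta> :: int
  assumes T: "(k, a, b, \<beta>) \<in> Tab n"
begin

lemma TT: "2 \<le> k" "k \<le> n" "\<forall>i\<in>{1..n}. i \<noteq> k - 1 \<and> i \<noteq> k \<longrightarrow> 0 \<le> a i \<and> a i \<le> int i - 1"
  "0 \<le> a (k - 1)" "a (k - 1) < a k" "0 \<le> b" "a k + b \<le> int k - 2" "0 \<le> \<beta>"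
  "a (k - 1) + \<beta> < a k + b"
  using T unfolding Tab_def by auto

definition LVs :: "nat \<Rightarrow> (int \<times> int) set" where
  "LVs i = (if i = k - 1 then row (int k - 1) 0 (a (k - 1))
     else if i = k then row (int k) 0 (a k) \<union> row (int k - 1) (a k) (a k + b)
     else row (int i) 0 (a i))"

definition RVs :: "nat \<Rightarrow> (int \<times> int) set" where
  "RVs i = (if i = k - 1 then row (int k - 1) (a (k - 1)) (a (k - 1) + \<beta>) \<union> row (int k) (a (k - 1) + \<beta> + 1) (int k - 1)
     else if i = k then row (int k - 1) (a k + b) (int k - 2)
     else row (int i) (a i) (int i - 1))"

lemma row_grid: "0 \<le> x0 \<Longrightarrow> x1 < y \<Longrightarrow> y \<le> int n \<Longrightarrow> row y x0 x1 \<subseteq> grid n"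
  unfolding grid_def by auto

lemma pinfo:
  assumes i: "i \<in> {1..n}"
  shows "left_verts (0, int i) (pth k a b \<beta> i) = LVs i \<and>
    right_verts (0, int i) (pth k a b \<beta> i) = RVs i \<and>
    set (verts (0, int i) (pth k a b \<beta> i)) \<subseteq> grid n \<and>
    endp (0, int i) (pth k a b \<beta> i) = (int (swp k i) - 1, int (swp k i)) \<and>
    cnt StepN (pth k a b \<beta> i) = (if i = k - 1 then 1 else 0) \<and>
    (\<exists>L R. pth k a b \<beta> i = L @ R \<and> set L \<subseteq> {StepS, StepE} \<and> set R \<subseteq> {StepF, StepN})"
proof -
  note tt = TT
  have k1: "int (k - 1) = int k - 1" using tt by auto
  consider "i = k - 1" | "i = k" | "i \<noteq> k - 1" "i \<noteq> k" by blast
  then show ?thesis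
  proof cases
    case 1
    have ne: "k - 1 \<noteq> k" using tt by simp
    have g: "0 \<le> int k - 2 - a (k - 1) - \<beta>" using tt by linarith
    have p: "pth k a b \<beta> i = Es (a (k - 1)) @ Fs \<beta> @ [StepN] @ Fs (int k - 2 - a (k - 1) - \<beta>)"
      unfolding pth_def using 1 by simp
    note P = path_km1[OF tt(4) tt(8) g]
    have e: "a (k - 1) + \<beta> + 1 + (int k - 2 - a (k - 1) - \<beta>) = int k - 1" by simp
    have yi: "int i = int k - 1" using 1 k1 by simp
    have L: "left_verts (0, int i) (pth k a b \<beta> i) = LVs i" unfolding p yi P(1) LVs_def using 1 by simp
    have R: "right_verts (0, int i) (pth k a b \<beta> i) = RVs i" unfolding p yi P(2) RVs_def e using 1 by simp
    have G: "set (verts (0, int i) (pth k a b \<beta> i)) \<subseteq> grid n"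
      unfolding p yi P(3) e using tt by (intro Un_least row_grid) auto
    have E: "endp (0, int i) (pth k a b \<beta> i) = (int (swp k i) - 1, int (swp k i))"
      unfolding p yi P(4) e swp_def using 1 by simp
    have N: "cnt StepN (pth k a b \<beta> i) = (if i = k - 1 then 1 else 0)" unfolding p using P(5) 1 by simp
    show ?thesis using L R G E N P(7) p by simp
  next
    case 2
    have d: "0 \<le> int k - 2 - a k - b" using tt by linarith
    have ak: "0 \<le> a k" using tt by linarith
    have ne: "k \<noteq> k - 1" using tt by simp
    have p: "pth k a b \<beta> i = Es (a k) @ [StepS] @ Es b @ Fs (int k - 2 - a k - b)"
      unfolding pth_def using 2 ne by simp
    note P = path_k[OF ak tt(6) d]
    have e: "a k + b + (int k - 2 - a k - b) = int k - 2" by simp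
    have yi: "int i = int k" using 2 by simp
    have L: "left_verts (0, int i) (pth k a b \<beta> i) = LVs i" unfolding p yi P(1) LVs_def using 2 ne by simp
    have R: "right_verts (0, int i) (pth k a b \<beta> i) = RVs i" unfolding p yi P(2) RVs_def e using 2 ne by simp
    have G: "set (verts (0, int i) (pth k a b \<beta> i)) \<subseteq> grid n"
      unfolding p yi P(3) e using tt by (intro Un_least row_grid) auto
    have E: "endp (0, int i) (pth k a b \<beta> i) = (int (swp k i) - 1, int (swp k i))"
      unfolding p yi P(4) e swp_def using 2 ne k1 by simp
    have N: "cnt StepN (pth k a b \<beta> i) = (if i = k - 1 then 1 else 0)" unfolding p using P(5) 2 ne by simp
    show ?thesis using L R G E N P(7) p by simp
  next
    case 3
    have ai: "0 \<le> a i" "a i \<le> int i - 1" using tt(3) i 3 by auto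
    have r: "0 \<le> int i - 1 - a i" using ai by simp
    have p: "pth k a b \<beta> i = Es (a i) @ Fs (int i - 1 - a i)"
      unfolding pth_def using 3 by simp
    note P = path_ord[OF ai(1) r]
    have e: "a i + (int i - 1 - a i) = int i - 1" by simp
    have L: "left_verts (0, int i) (pth k a b \<beta> i) = LVs i" unfolding p P(1) LVs_def using 3 by simp
    have R: "right_verts (0, int i) (pth k a b \<beta> i) = RVs i" unfolding p P(2) RVs_def e using 3 by simp
    have G: "set (verts (0, int i) (pth k a b \<beta> i)) \<subseteq> grid n"
      unfolding p P(3) e using ai i by (intro row_grid) auto
    have E: "endp (0, int i) (pth k a b \<beta> i) = (int (swp k i) - 1, int (swp k i))"
      unfolding p P(4) e swp_def using 3 by simp
    have N: "cnt StepN (pth k a b \<beta> i) = (if i = k - 1 then 1 else 0)" unfolding p using P(5) 3 by simp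
    show ?thesis using L R G E N P(7) p by simp
  qed
qed

lemma LV_disj:
  assumes i: "i \<in> {1..n}" and j: "j \<in> {1..n}" and ne: "i \<noteq> j"
  shows "LVs i \<inter> LVs j = {}"
proof (rule ccontr)
  assume "LVs i \<inter> LVs j \<noteq> {}"
  then obtain x y where xy: "(x, y) \<in> LVs i" "(x, y) \<in> LVs j" by auto
  note tt = TT
  have k1: "int (k - 1) = int k - 1" using tt by auto
  have ii: "i = k - 1 \<longleftrightarrow> int i = int k - 1" "i = k \<longleftrightarrow> int i = int k" using tt by auto
  have jj: "j = k - 1 \<longleftrightarrow> int j = int k - 1" "j = k \<longleftrightarrow> int j = int k" using tt by auto
  have ij: "int i \<noteq> int j" using ne by simp
  show False using xy tt(5) ij unfolding LVs_def ii jj by (auto split: if_splits)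
qed

lemma RV_disj:
  assumes i: "i \<in> {1..n}" and j: "j \<in> {1..n}" and ne: "i \<noteq> j"
  shows "RVs i \<inter> RVs j = {}"
proof (rule ccontr)
  assume "RVs i \<inter> RVs j \<noteq> {}"
  then obtain x y where xy: "(x, y) \<in> RVs i" "(x, y) \<in> RVs j" by auto
  note tt = TT
  have ii: "i = k - 1 \<longleftrightarrow> int i = int k - 1" "i = k \<longleftrightarrow> int i = int k" using tt by auto
  have jj: "j = k - 1 \<longleftrightarrow> int j = int k - 1" "j = k \<longleftrightarrow> int j = int k" using tt by auto
  have ij: "int i \<noteq> int j" using ne by simp
  show False using xy tt(9) ij unfolding RVs_def ii jj by (auto split: if_splits)
qed

lemma Psi_MM: "Psi n k a b \<beta> \<in> MM n 1"
proof -
  note tt = TT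
  let ?ws = "Psi n k a b \<beta>"
  have nth: "\<And>i. i \<in> {1..n} \<Longrightarrow> ?ws ! (i - 1) = pth k a b \<beta> i" using Psi_nth by blast
  have mc: "mixed_config n ?ws"
    unfolding mixed_config_def
  proof (intro conjI)
    show "length ?ws = n" by simp
    show "\<exists>\<sigma>. bij_betw \<sigma> {1..n} {1..n} \<and>
        (\<forall>i\<in>{1..n}. mixed_path n (0, int i) (?ws ! (i - 1)) \<and>
            last (verts (0, int i) (?ws ! (i - 1))) = (int (\<sigma> i) - 1, int (\<sigma> i)))"
    proof (intro exI conjI ballI)
      show "bij_betw (swp k) {1..n} {1..n}" using swp_bij tt by blast
    next
      fix i assume i: "i \<in> {1..n}"
      show "mixed_path n (0, int i) (?ws ! (i - 1))"
        unfolding mixed_path_def nth[OF i] using pinfo[OF i] by blast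
      show "last (verts (0, int i) (?ws ! (i - 1))) = (int (swp k i) - 1, int (swp k i))"
        unfolding nth[OF i] using pinfo[OF i] endp_def by simp
    qed
    show "\<forall>i\<in>{1..n}. \<forall>j\<in>{1..n}. i \<noteq> j \<longrightarrow>
        left_verts (0, int i) (?ws ! (i - 1)) \<inter> left_verts (0, int j) (?ws ! (j - 1)) = {}"
      using nth pinfo LV_disj by simp
    show "\<forall>i\<in>{1..n}. \<forall>j\<in>{1..n}. i \<noteq> j \<longrightarrow>
        right_verts (0, int i) (?ws ! (i - 1)) \<inter> right_verts (0, int j) (?ws ! (j - 1)) = {}"
      using nth pinfo RV_disj by simp
  qed
  have "num_N ?ws = sum_list (map (\<lambda>i. cnt StepN (pth k a b \<beta> i)) [1..<n+1])"
    unfolding num_N_def Psi_def by (simp only: map_map comp_def)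
  also have "... = (\<Sum>i\<in>set [1..<n+1]. cnt StepN (pth k a b \<beta> i))"
    by (rule interv_sum_list_conv_sum_set_nat)
  also have "... = (\<Sum>i\<in>{1..<n+1}. (if i = k - 1 then 1 else 0))"
    unfolding set_upt by (rule sum.cong) (use pinfo in auto)
  also have "... = 1"
  proof -
    have "k - 1 \<in> {1..<n+1}" using tt by auto
    then show ?thesis by simp
  qed
  finally show ?thesis using mc unfolding MM_def by simp
qed

end


lemma shape0:
  assumes "set L \<subseteq> {X, Y}" "cnt Y L = 0"
  shows "L = replicate (length L) X"
proof -
  have "filter (\<lambda>s. s = Y) L = []" using assms(2) by blast
  then have "\<forall>x\<in>set L. x \<noteq> Y" by (simp add: filter_empty_conv)
  then have "\<forall>y\<in>set L. y = X" using assms(1) by blast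
  then show ?thesis by (simp add: replicate_length_same)
qed

lemma shape0':
  assumes "set L \<subseteq> {X, Y}" "cnt Y L = 0"
  shows "\<exists>m. L = replicate m X"
  using shape0[OF assms] by blast

lemma shape1:
  assumes "set L \<subseteq> {X, Y}" "cnt Y L = 1"
  shows "\<exists>p u. L = replicate p X @ [Y] @ replicate u X"
proof -
  have "Y \<in> set L"
  proof (rule ccontr)
    assume "Y \<notin> set L"
    then have "filter (\<lambda>s. s = Y) L = []" unfolding filter_empty_conv by blast
    then show False using assms(2) by simp
  qed
  then obtain xs ys where L: "L = xs @ Y # ys" "Y \<notin> set xs" by (meson split_list_first)
  have f: "filter (\<lambda>s. s = Y) xs = []" using L(2) unfolding filter_empty_conv by blast
  then have "cnt Y ys = 0" using assms(2) L(1) by simp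
  moreover have "set ys \<subseteq> {X, Y}" using assms(1) L(1) by simp
  ultimately obtain u where u: "ys = replicate u X" using shape0' by blast
  have "cnt Y xs = 0" using f by simp
  moreover have "set xs \<subseteq> {X, Y}" using assms(1) L(1) by simp
  ultimately obtain p where p: "xs = replicate p X" using shape0' by blast
  have "L = replicate p X @ [Y] @ replicate u X" using L(1) p u by simp
  then show ?thesis by blast
qed

lemma tw_E: "takeWhile (\<lambda>s. s = StepE) (replicate p StepE @ w) = replicate p StepE @ takeWhile (\<lambda>s. s = StepE) w"
  by (rule takeWhile_append2) auto
lemma dw_E: "dropWhile (\<lambda>s. s = StepE) (replicate p StepE @ w) = dropWhile (\<lambda>s. s = StepE) w"
  by (rule dropWhile_append2) auto
lemma tw_F: "takeWhile (\<lambda>s. s = StepF) (replicate p StepF @ w) = replicate p StepF @ takeWhile (\<lambda>s. s = StepF) w"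
  by (rule takeWhile_append2) auto

definition lead :: "step \<Rightarrow> step list \<Rightarrow> nat" where
  "lead X w = length (takeWhile (\<lambda>s. s = X) w)"

lemma lead_E_ord: "lead StepE (replicate p StepE @ replicate r StepF) = p"
  unfolding lead_def tw_E by (cases r) auto
lemma lead_E_N: "lead StepE (replicate p StepE @ replicate v StepF @ [StepN] @ replicate z StepF) = p"
  unfolding lead_def tw_E by (cases v) auto
lemma lead_E_S: "lead StepE (replicate p StepE @ [StepS] @ replicate u StepE @ replicate r StepF) = p"
  unfolding lead_def tw_E by simp
lemma lead_F_N: "lead StepF (dropWhile (\<lambda>s. s = StepE) (replicate p StepE @ replicate v StepF @ [StepN] @ replicate z StepF)) = v"
  unfolding lead_def dw_E
proof -
  have "dropWhile (\<lambda>s. s = StepE) (replicate v StepF @ [StepN] @ replicate z StepF) = replicate v StepF @ [StepN] @ replicate z StepF"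
    by (cases v) auto
  then show "length (takeWhile (\<lambda>s. s = StepF) (dropWhile (\<lambda>s. s = StepE) (replicate v StepF @ [StepN] @ replicate z StepF))) = v"
    using tw_F by simp
qed

context
  fixes n k :: nat and a :: "nat \<Rightarrow> int" and b \<beta> :: int
  assumes T: "(k, a, b, \<beta>) \<in> Tab n"
begin

lemma pth_S: "i \<in> {1..n} \<Longrightarrow> StepS \<in> set (pth k a b \<beta> i) \<longleftrightarrow> i = k"
  unfolding pth_def using TT[OF T] by auto

lemma pth_lead: "i \<in> {1..n} \<Longrightarrow> int (lead StepE (pth k a b \<beta> i)) = a i"
proof -
  assume i: "i \<in> {1..n}"
  note tt = TT[OF T]
  consider "i = k - 1" | "i = k" | "i \<noteq> k - 1" "i \<noteq> k" by blast
  then show ?thesis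
  proof cases
    case 1 then show ?thesis unfolding pth_def using lead_E_N tt by simp
  next
    case 2
    have "k \<noteq> k - 1" using tt by simp
    then show ?thesis unfolding pth_def using lead_E_S tt 2 by simp
  next
    case 3
    then have "0 \<le> a i" using tt(3) i by blast
    then show ?thesis unfolding pth_def using lead_E_ord 3 by simp
  qed
qed

lemma pth_b: "int (cnt StepE (pth k a b \<beta> k)) - a k = b"
proof -
  note tt = TT[OF T]
  have "k \<noteq> k - 1" using tt by simp
  moreover have "0 \<le> a k" using tt by linarith
  ultimately show ?thesis unfolding pth_def using tt by simp
qed

lemma pth_beta: "int (lead StepF (dropWhile (\<lambda>s. s = StepE) (pth k a b \<beta> (k - 1)))) = \<beta>"
  unfolding pth_def using lead_F_N TT[OF T] by simp

end

lemma Psi_inj: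
  assumes T: "(k, a, b, \<beta>) \<in> Tab n" and T': "(k', a', b', \<beta>') \<in> Tab n"
    and e: "Psi n k a b \<beta> = Psi n k' a' b' \<beta>'"
  shows "k = k' \<and> (\<forall>i\<in>{1..n}. a i = a' i) \<and> b = b' \<and> \<beta> = \<beta>'"
proof -
  have pe: "pth k a b \<beta> i = pth k' a' b' \<beta>' i" if i: "i \<in> {1..n}" for i
  proof -
    have "pth k a b \<beta> i = Psi n k a b \<beta> ! (i - 1)" using Psi_nth[OF i] by simp
    also have "... = Psi n k' a' b' \<beta>' ! (i - 1)" using e by simp
    also have "... = pth k' a' b' \<beta>' i" using Psi_nth[OF i] by simp
    finally show ?thesis .
  qed
  have kn: "k \<in> {1..n}" using TT[OF T] by auto
  have "StepS \<in> set (pth k a b \<beta> k)" using pth_S[OF T kn] by simp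
  then have "StepS \<in> set (pth k' a' b' \<beta>' k)" using pe[OF kn] by simp
  then have kk: "k = k'" using pth_S[OF T' kn] by simp
  have aa: "\<forall>i\<in>{1..n}. a i = a' i"
  proof
    fix i assume i: "i \<in> {1..n}"
    have "a i = int (lead StepE (pth k a b \<beta> i))" using pth_lead[OF T i] by simp
    also have "... = int (lead StepE (pth k' a' b' \<beta>' i))" using pe[OF i] by simp
    also have "... = a' i" using pth_lead[OF T' i] .
    finally show "a i = a' i" .
  qed
  have bb: "b = b'"
  proof -
    have "b = int (cnt StepE (pth k a b \<beta> k)) - a k" using pth_b[OF T] by simp
    also have "... = int (cnt StepE (pth k' a' b' \<beta>' k')) - a' k'" using pe[OF kn] kk aa kn by simp
    also have "... = b'" using pth_b[OF T'] .
    finally show ?thesis .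
  qed
  have k1n: "k - 1 \<in> {1..n}" using TT[OF T] by auto
  have "\<beta> = int (lead StepF (dropWhile (\<lambda>s. s = StepE) (pth k a b \<beta> (k - 1))))" using pth_beta[OF T] by simp
  also have "... = int (lead StepF (dropWhile (\<lambda>s. s = StepE) (pth k' a' b' \<beta>' (k' - 1))))" using pe[OF k1n] kk by simp
  also have "... = \<beta>'" using pth_beta[OF T'] .
  finally show ?thesis using kk aa bb by simp
qed


lemma sum_one_nat:
  assumes "finite A" "(\<Sum>x\<in>A. f x) = (1::nat)"
  shows "\<exists>x0\<in>A. f x0 = 1 \<and> (\<forall>x\<in>A. x \<noteq> x0 \<longrightarrow> f x = 0)"
proof -
  obtain x0 where x0: "x0 \<in> A" "f x0 \<noteq> 0"
    using assms(2) by (metis sum.neutral zero_neq_one)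
  have s: "(\<Sum>x\<in>A. f x) = f x0 + (\<Sum>x\<in>A - {x0}. f x)"
    using assms(1) x0(1) by (simp add: sum.remove)
  then have "f x0 = 1" "(\<Sum>x\<in>A - {x0}. f x) = 0" using assms(2) x0(2) by linarith+
  then show ?thesis using x0 assms(1) by auto
qed

lemma endp_mem: "endp p u \<in> set (verts p (u @ w))"
  unfolding set_verts_app using p_in_verts by blast

lemma verts_app_sub1: "set (verts p u) \<subseteq> set (verts p (u @ w))"
  unfolding set_verts_app by blast

lemma verts_app_sub2: "set (verts (endp p u) w) \<subseteq> set (verts p (u @ w))"
  unfolding set_verts_app by blast

lemma seg_Er: "set (verts (x, y) (replicate m StepE)) = {(x', y'). y' = y \<and> x \<le> x' \<and> x' \<le> x + int m}"
  by (rule seg_verts) simp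
lemma seg_Fr: "set (verts (x, y) (replicate m StepF)) = {(x', y'). y' = y \<and> x \<le> x' \<and> x' \<le> x + int m}"
  by (rule seg_verts) simp
lemma endp_Er: "endp (x, y) (replicate m StepE) = (x + int m, y)"
  by (rule seg_endp) simp
lemma endp_Fr: "endp (x, y) (replicate m StepF) = (x + int m, y)"
  by (rule seg_endp) simp


context
  fixes n :: nat and ws :: "step list list"
  assumes W: "ws \<in> MM n 1"
begin

lemma W_len: "length ws = n" using W unfolding MM_def mixed_config_def by auto

definition sg :: "nat \<Rightarrow> nat" where
  "sg = (SOME \<sigma>. bij_betw \<sigma> {1..n} {1..n} \<and>
        (\<forall>i\<in>{1..n}. mixed_path n (0, int i) (ws ! (i - 1)) \<and>
            last (verts (0, int i) (ws ! (i - 1))) = (int (\<sigma> i) - 1, int (\<sigma> i))))"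

lemma sg_prop: "bij_betw sg {1..n} {1..n} \<and>
        (\<forall>i\<in>{1..n}. mixed_path n (0, int i) (ws ! (i - 1)) \<and>
            last (verts (0, int i) (ws ! (i - 1))) = (int (sg i) - 1, int (sg i)))"
proof -
  have "\<exists>\<sigma>. bij_betw \<sigma> {1..n} {1..n} \<and>
        (\<forall>i\<in>{1..n}. mixed_path n (0, int i) (ws ! (i - 1)) \<and>
            last (verts (0, int i) (ws ! (i - 1))) = (int (\<sigma> i) - 1, int (\<sigma> i)))"
    using W unfolding MM_def mixed_config_def by blast
  then show ?thesis unfolding sg_def by (rule someI_ex)
qed

lemma sg_bij: "bij_betw sg {1..n} {1..n}" using sg_prop by blast
lemma sg_path: "i \<in> {1..n} \<Longrightarrow> mixed_path n (0, int i) (ws ! (i - 1))" using sg_prop by blast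
lemma sg_end: "i \<in> {1..n} \<Longrightarrow> endp (0, int i) (ws ! (i - 1)) = (int (sg i) - 1, int (sg i))"
  using sg_prop unfolding endp_def by blast
lemma sg_inj: "i \<in> {1..n} \<Longrightarrow> j \<in> {1..n} \<Longrightarrow> sg i = sg j \<Longrightarrow> i = j"
  using sg_bij unfolding bij_betw_def by (meson inj_onD)

lemma W_LD: "i \<in> {1..n} \<Longrightarrow> j \<in> {1..n} \<Longrightarrow> i \<noteq> j \<Longrightarrow>
    left_verts (0, int i) (ws ! (i - 1)) \<inter> left_verts (0, int j) (ws ! (j - 1)) = {}"
  using W unfolding MM_def mixed_config_def by blast
lemma W_RD: "i \<in> {1..n} \<Longrightarrow> j \<in> {1..n} \<Longrightarrow> i \<noteq> j \<Longrightarrow>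
    right_verts (0, int i) (ws ! (i - 1)) \<inter> right_verts (0, int j) (ws ! (j - 1)) = {}"
  using W unfolding MM_def mixed_config_def by blast
lemma W_NN: "num_N ws = 1" using W unfolding MM_def by simp

abbreviation "Lp i \<equiv> left_part (ws ! (i - 1))"
abbreviation "Rp i \<equiv> right_part (ws ! (i - 1))"

lemma LR:
  assumes i: "i \<in> {1..n}"
  shows "ws ! (i - 1) = Lp i @ Rp i" "set (Lp i) \<subseteq> {StepS, StepE}" "set (Rp i) \<subseteq> {StepF, StepN}"
proof -
  obtain L R where LR: "ws ! (i - 1) = L @ R" "set L \<subseteq> {StepS, StepE}" "set R \<subseteq> {StepF, StepN}"
    using sg_path[OF i] unfolding mixed_path_def by blast
  have "Lp i = L" "Rp i = R" using left_right[OF LR(2,3)] LR(1) by simp_all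
  then show "ws ! (i - 1) = Lp i @ Rp i" "set (Lp i) \<subseteq> {StepS, StepE}" "set (Rp i) \<subseteq> {StepF, StepN}"
    using LR by simp_all
qed

lemma W_grid: "i \<in> {1..n} \<Longrightarrow> set (verts (0, int i) (ws ! (i - 1))) \<subseteq> grid n"
  using sg_path unfolding mixed_path_def by blast

lemma lv_eq: "left_verts (0, int i) (ws ! (i - 1)) = set (verts (0, int i) (Lp i))"
  unfolding left_verts_def by simp
lemma rv_eq: "right_verts (0, int i) (ws ! (i - 1)) = set (verts (endp (0, int i) (Lp i)) (Rp i))"
  unfolding right_verts_def endp_def by simp

lemma cntS_R: "i \<in> {1..n} \<Longrightarrow> cnt StepS (Rp i) = 0"
  using LR(3) by (fastforce simp: filter_empty_conv)
lemma cntN_L: "i \<in> {1..n} \<Longrightarrow> cnt StepN (Lp i) = 0"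
  using LR(2) by (fastforce simp: filter_empty_conv)

definition cS :: "nat \<Rightarrow> nat" where "cS i = cnt StepS (Lp i)"
definition cN :: "nat \<Rightarrow> nat" where "cN i = cnt StepN (Rp i)"

lemma cnt_w: "i \<in> {1..n} \<Longrightarrow> cnt StepS (ws ! (i - 1)) = cS i \<and> cnt StepN (ws ! (i - 1)) = cN i"
proof -
  assume i: "i \<in> {1..n}"
  have "ws ! (i - 1) = Lp i @ Rp i" using LR[OF i] by simp
  then show ?thesis using cntS_R[OF i] cntN_L[OF i] unfolding cS_def cN_def
    by (metis add.right_neutral add_0 filter_append length_append)
qed

lemma yeq: "i \<in> {1..n} \<Longrightarrow> int (sg i) = int i - int (cS i) + int (cN i)"
  using sg_end[of i] endp_formula[of 0 "int i" "ws ! (i - 1)"] cnt_w[of i] by simp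

lemma xeq: "i \<in> {1..n} \<Longrightarrow> int (sg i) - 1 = int (cnt StepE (ws ! (i - 1)) + cnt StepF (ws ! (i - 1)) + cnt StepN (ws ! (i - 1)))"
  using sg_end[of i] endp_formula[of 0 "int i" "ws ! (i - 1)"] by simp

lemma ws_map: "ws = map (\<lambda>i. ws ! (i - 1)) [1..<n+1]"
proof (rule nth_equalityI)
  show "length ws = length (map (\<lambda>i. ws ! (i - 1)) [1..<n+1])" using W_len by simp
next
  fix j assume "j < length ws"
  then have "j < n" using W_len by simp
  then show "ws ! j = map (\<lambda>i. ws ! (i - 1)) [1..<n+1] ! j" by (simp del: upt_Suc)
qed

lemma sumN: "(\<Sum>i\<in>{1..n}. cN i) = 1"
proof -
  have "num_N ws = sum_list (map (\<lambda>i. cnt StepN (ws ! (i - 1))) [1..<n+1])"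
    unfolding num_N_def by (subst ws_map) (simp only: map_map comp_def)
  also have "... = (\<Sum>i\<in>set [1..<n+1]. cnt StepN (ws ! (i - 1)))"
    by (rule interv_sum_list_conv_sum_set_nat)
  also have "... = (\<Sum>i\<in>{1..n}. cN i)"
    unfolding set_upt by (rule sum.cong) (use cnt_w in auto)
  finally show ?thesis using W_NN by simp
qed

lemma sumS: "(\<Sum>i\<in>{1..n}. cS i) = 1"
proof -
  have "(\<Sum>i\<in>{1..n}. int (sg i)) = (\<Sum>i\<in>{1..n}. int i)"
    using sum.reindex_bij_betw[OF sg_bij, of int] by simp
  moreover have "(\<Sum>i\<in>{1..n}. int (sg i)) = (\<Sum>i\<in>{1..n}. int i - int (cS i) + int (cN i))"
    by (rule sum.cong) (use yeq in auto)
  ultimately have "(\<Sum>i\<in>{1..n}. int (cS i)) = (\<Sum>i\<in>{1..n}. int (cN i))"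
    by (simp add: sum.distrib sum_subtractf)
  then have "int (\<Sum>i\<in>{1..n}. cS i) = int (\<Sum>i\<in>{1..n}. cN i)" by (simp only: of_nat_sum)
  then have "(\<Sum>i\<in>{1..n}. cS i) = (\<Sum>i\<in>{1..n}. cN i)" by (rule of_nat_eq_iff[THEN iffD1])
  then show ?thesis using sumN by simp
qed

definition i0 where "i0 = (SOME i. i \<in> {1..n} \<and> cS i = 1 \<and> (\<forall>x\<in>{1..n}. x \<noteq> i \<longrightarrow> cS x = 0))"
definition j0 where "j0 = (SOME i. i \<in> {1..n} \<and> cN i = 1 \<and> (\<forall>x\<in>{1..n}. x \<noteq> i \<longrightarrow> cN x = 0))"

lemma i0_prop: "i0 \<in> {1..n} \<and> cS i0 = 1 \<and> (\<forall>x\<in>{1..n}. x \<noteq> i0 \<longrightarrow> cS x = 0)"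
  unfolding i0_def by (rule someI_ex) (use sum_one_nat[OF _ sumS] in blast)
lemma j0_prop: "j0 \<in> {1..n} \<and> cN j0 = 1 \<and> (\<forall>x\<in>{1..n}. x \<noteq> j0 \<longrightarrow> cN x = 0)"
  unfolding j0_def by (rule someI_ex) (use sum_one_nat[OF _ sumN] in blast)

lemma shL0: "i \<in> {1..n} \<Longrightarrow> i \<noteq> i0 \<Longrightarrow> \<exists>p. Lp i = replicate p StepE"
proof -
  assume i: "i \<in> {1..n}" "i \<noteq> i0"
  have "set (Lp i) \<subseteq> {StepE, StepS}" using LR(2)[OF i(1)] by auto
  moreover have "cnt StepS (Lp i) = 0" using i0_prop i unfolding cS_def by blast
  ultimately show ?thesis using shape0' by blast
qed

lemma shL1: "\<exists>p u. Lp i0 = replicate p StepE @ [StepS] @ replicate u StepE"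
proof -
  have i: "i0 \<in> {1..n}" using i0_prop by blast
  have "set (Lp i0) \<subseteq> {StepE, StepS}" using LR(2)[OF i] by auto
  moreover have "cnt StepS (Lp i0) = 1" using i0_prop unfolding cS_def by blast
  ultimately show ?thesis using shape1 by blast
qed

lemma shR0: "i \<in> {1..n} \<Longrightarrow> i \<noteq> j0 \<Longrightarrow> \<exists>r. Rp i = replicate r StepF"
proof -
  assume i: "i \<in> {1..n}" "i \<noteq> j0"
  have "set (Rp i) \<subseteq> {StepF, StepN}" using LR(3)[OF i(1)] by auto
  moreover have "cnt StepN (Rp i) = 0" using j0_prop i unfolding cN_def by blast
  ultimately show ?thesis using shape0' by blast
qed

lemma shR1: "\<exists>v z. Rp j0 = replicate v StepF @ [StepN] @ replicate z StepF"
proof -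
  have i: "j0 \<in> {1..n}" using j0_prop by blast
  have "set (Rp j0) \<subseteq> {StepF, StepN}" using LR(3)[OF i] by auto
  moreover have "cnt StepN (Rp j0) = 1" using j0_prop unfolding cN_def by blast
  ultimately show ?thesis using shape1 by blast
qed

lemma sg_other: "i \<in> {1..n} \<Longrightarrow> i \<noteq> i0 \<Longrightarrow> i \<noteq> j0 \<Longrightarrow> sg i = i"
  using yeq[of i] i0_prop j0_prop by simp

lemma i0n: "i0 \<in> {1..n}" using i0_prop by blast
lemma j0n: "j0 \<in> {1..n}" using j0_prop by blast

lemma left_sub: "i \<in> {1..n} \<Longrightarrow> left_verts (0, int i) (ws ! (i - 1)) \<subseteq> grid n"
  using W_grid[of i] LR(1)[of i] verts_app_sub1[of "(0, int i)" "Lp i" "Rp i"] lv_eq[of i] by auto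

lemma i0_geom:
  obtains p u where "Lp i0 = replicate p StepE @ [StepS] @ replicate u StepE"
    "(int p, int i0 - 1) \<in> left_verts (0, int i0) (ws ! (i0 - 1))"
    "endp (0, int i0) (Lp i0) = (int p + int u, int i0 - 1)"
    "(int p + int u, int i0 - 1) \<in> right_verts (0, int i0) (ws ! (i0 - 1))"
    "int p + int u < int i0 - 1"
proof -
  obtain p u where L: "Lp i0 = replicate p StepE @ [StepS] @ replicate u StepE" using shL1 by blast
  have e1: "endp (0, int i0) (replicate p StepE) = (int p, int i0)" using endp_Er[of 0 "int i0" p] by simp
  have P1: "(int p, int i0 - 1) \<in> left_verts (0, int i0) (ws ! (i0 - 1))"
  proof -
    have "(int p, int i0 - 1) \<in> set (verts (int p, int i0) ([StepS] @ replicate u StepE))"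
      using endp_mem[of "(int p, int i0)" "[StepS]" "replicate u StepE"] by simp
    moreover have "set (verts (endp (0, int i0) (replicate p StepE)) ([StepS] @ replicate u StepE)) \<subseteq>
        set (verts (0, int i0) (replicate p StepE @ [StepS] @ replicate u StepE))"
      by (rule verts_app_sub2)
    ultimately show ?thesis unfolding lv_eq L e1 by blast
  qed
  have J: "endp (0, int i0) (Lp i0) = (int p + int u, int i0 - 1)"
    unfolding L endp_app e1 using endp_Er[of "int p" "int i0 - 1" u] by simp
  have JR: "(int p + int u, int i0 - 1) \<in> right_verts (0, int i0) (ws ! (i0 - 1))"
    unfolding rv_eq J using p_in_verts by blast
  have JL: "(int p + int u, int i0 - 1) \<in> left_verts (0, int i0) (ws ! (i0 - 1))"
  proof -
    have "endp (0, int i0) (Lp i0) \<in> set (verts (0, int i0) (Lp i0 @ []))" by (rule endp_mem)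
    then show ?thesis unfolding lv_eq J by simp
  qed
  have "(int p + int u, int i0 - 1) \<in> grid n" using JL left_sub[OF i0n] by blast
  then have "int p + int u < int i0 - 1" unfolding grid_def by simp
  then show ?thesis using that L P1 J JR by blast
qed

lemma ord_geom:
  assumes i: "i \<in> {1..n}" "i \<noteq> i0" "i \<noteq> j0"
  obtains p r where "ws ! (i - 1) = replicate p StepE @ replicate r StepF"
    "int p + int r = int i - 1"
    "left_verts (0, int i) (ws ! (i - 1)) = {(x, y). y = int i \<and> 0 \<le> x \<and> x \<le> int p}"
    "right_verts (0, int i) (ws ! (i - 1)) = {(x, y). y = int i \<and> int p \<le> x \<and> x \<le> int p + int r}"
proof -
  obtain p where p: "Lp i = replicate p StepE" using shL0 i by blast
  obtain r where r: "Rp i = replicate r StepF" using shR0 i by blast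
  have w: "ws ! (i - 1) = replicate p StepE @ replicate r StepF" using LR(1)[OF i(1)] p r by simp
  have "int (sg i) - 1 = int p + int r" using xeq[OF i(1)] w by simp
  then have e: "int p + int r = int i - 1" using sg_other[OF i] by simp
  have lv: "left_verts (0, int i) (ws ! (i - 1)) = {(x, y). y = int i \<and> 0 \<le> x \<and> x \<le> int p}"
    unfolding lv_eq p seg_Er by simp
  have e1: "endp (0, int i) (Lp i) = (int p, int i)" unfolding p using endp_Er[of 0 "int i" p] by simp
  have rv: "right_verts (0, int i) (ws ! (i - 1)) = {(x, y). y = int i \<and> int p \<le> x \<and> x \<le> int p + int r}"
    unfolding rv_eq e1 r seg_Fr by simp
  show ?thesis using that w e lv rv by blast
qed

lemma neq: "i0 \<noteq> j0"
proof
  assume m: "i0 = j0"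
  obtain p u where L: "Lp i0 = replicate p StepE @ [StepS] @ replicate u StepE"
    and P1: "(int p, int i0 - 1) \<in> left_verts (0, int i0) (ws ! (i0 - 1))"
    and JR: "(int p + int u, int i0 - 1) \<in> right_verts (0, int i0) (ws ! (i0 - 1))"
    and lt: "int p + int u < int i0 - 1"
    by (rule i0_geom)
  let ?m = "i0 - 1"
  have mn: "?m \<in> {1..n}" "?m \<noteq> i0" "?m \<noteq> j0" using lt i0n m by auto
  have mi: "int ?m = int i0 - 1" using lt by auto
  obtain p' r' where "ws ! (?m - 1) = replicate p' StepE @ replicate r' StepF" and e: "int p' + int r' = int ?m - 1"
    and lv: "left_verts (0, int ?m) (ws ! (?m - 1)) = {(x, y). y = int ?m \<and> 0 \<le> x \<and> x \<le> int p'}"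
    and rv: "right_verts (0, int ?m) (ws ! (?m - 1)) = {(x, y). y = int ?m \<and> int p' \<le> x \<and> x \<le> int p' + int r'}"
    by (rule ord_geom[OF mn])
  show False
  proof (cases "p \<le> p'")
    case True
    then have "(int p, int i0 - 1) \<in> {(x, y). y = int ?m \<and> 0 \<le> x \<and> x \<le> int p'}" using mi by simp
    then have "(int p, int i0 - 1) \<in> left_verts (0, int ?m) (ws ! (?m - 1))" unfolding lv .
    moreover have "i0 \<noteq> i0 - 1" using mn(2) by simp
    ultimately show False using W_LD[OF i0n mn(1)] P1 by blast
  next
    case False
    then have "(int p + int u, int i0 - 1) \<in> {(x, y). y = int ?m \<and> int p' \<le> x \<and> x \<le> int p' + int r'}"
      using e lt mi by simp
    then have "(int p + int u, int i0 - 1) \<in> right_verts (0, int ?m) (ws ! (?m - 1))" unfolding rv .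
    moreover have "i0 \<noteq> i0 - 1" using mn(2) by simp
    ultimately show False using W_RD[OF i0n mn(1)] JR by blast
  qed
qed

lemma j0_geom:
  obtains p v z where "Lp j0 = replicate p StepE" "Rp j0 = replicate v StepF @ [StepN] @ replicate z StepF"
    "left_verts (0, int j0) (ws ! (j0 - 1)) = {(x, y). y = int j0 \<and> 0 \<le> x \<and> x \<le> int p}"
    "{(x, y). y = int j0 \<and> int p \<le> x \<and> x \<le> int p + int v} \<subseteq> right_verts (0, int j0) (ws ! (j0 - 1))"
proof -
  obtain p where p: "Lp j0 = replicate p StepE" using shL0 j0n neq by metis
  obtain v z where r: "Rp j0 = replicate v StepF @ [StepN] @ replicate z StepF" using shR1 by blast
  have lv: "left_verts (0, int j0) (ws ! (j0 - 1)) = {(x, y). y = int j0 \<and> 0 \<le> x \<and> x \<le> int p}"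
    unfolding lv_eq p seg_Er by simp
  have e1: "endp (0, int j0) (Lp j0) = (int p, int j0)" unfolding p using endp_Er[of 0 "int j0" p] by simp
  have rv: "{(x, y). y = int j0 \<and> int p \<le> x \<and> x \<le> int p + int v} \<subseteq> right_verts (0, int j0) (ws ! (j0 - 1))"
    unfolding rv_eq e1 r using verts_app_sub1[of "(int p, int j0)" "replicate v StepF"] seg_Fr[of "int p" "int j0" v] by auto
  show ?thesis using that p r lv rv by blast
qed

lemma j0_eq: "j0 = i0 - 1 \<and> 2 \<le> i0"
proof -
  obtain p u where lt: "int p + int u < int i0 - 1" using i0_geom by blast
  then have two: "2 \<le> i0" by linarith
  have "int (sg i0) = int i0 - 1" using yeq[OF i0n] i0_prop j0_prop neq by simp
  then have s0: "sg i0 = i0 - 1" using two by linarith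
  have "j0 = i0 - 1"
  proof (rule ccontr)
    assume ne: "j0 \<noteq> i0 - 1"
    have mn: "i0 - 1 \<in> {1..n}" "i0 - 1 \<noteq> i0" "i0 - 1 \<noteq> j0" using two i0n ne by auto
    have "sg (i0 - 1) = i0 - 1" using sg_other[OF mn] .
    then have "i0 - 1 = i0" using sg_inj[OF mn(1) i0n] s0 by simp
    then show False using two by simp
  qed
  then show ?thesis using two by simp
qed

lemma MM_Psi_ctx: "\<exists>k a b \<beta>. (k, a, b, \<beta>) \<in> Tab n \<and> ws = Psi n k a b \<beta>"
proof -
  define k where "k = i0"
  have jk: "j0 = k - 1" "2 \<le> k" using j0_eq unfolding k_def by auto
  have kn: "k \<in> {1..n}" "k - 1 \<in> {1..n}" using i0n jk unfolding k_def by auto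
  have kne: "k \<noteq> k - 1" using jk by simp
  obtain p u where Lk: "Lp i0 = replicate p StepE @ [StepS] @ replicate u StepE"
    and P1: "(int p, int i0 - 1) \<in> left_verts (0, int i0) (ws ! (i0 - 1))"
    and Jk: "endp (0, int i0) (Lp i0) = (int p + int u, int i0 - 1)"
    and JR: "(int p + int u, int i0 - 1) \<in> right_verts (0, int i0) (ws ! (i0 - 1))"
    and lt: "int p + int u < int i0 - 1"
    by (rule i0_geom)
  obtain r where Rk: "Rp i0 = replicate r StepF" using shR0[OF i0n] neq by blast
  have wk: "ws ! (k - 1) = replicate p StepE @ [StepS] @ replicate u StepE @ replicate r StepF"
    using LR(1)[OF i0n] Lk Rk unfolding k_def by simp
  have sgk: "int (sg k) = int k - 1" using yeq[OF i0n] i0_prop j0_prop neq unfolding k_def by simp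
  have ek: "int p + int u + int r = int k - 2" using xeq[OF kn(1)] wk sgk by simp
  obtain p1 v z where Lj: "Lp j0 = replicate p1 StepE" and Rj: "Rp j0 = replicate v StepF @ [StepN] @ replicate z StepF"
    and lvj: "left_verts (0, int j0) (ws ! (j0 - 1)) = {(x, y). y = int j0 \<and> 0 \<le> x \<and> x \<le> int p1}"
    and rvj: "{(x, y). y = int j0 \<and> int p1 \<le> x \<and> x \<le> int p1 + int v} \<subseteq> right_verts (0, int j0) (ws ! (j0 - 1))"
    by (rule j0_geom)
  have wj: "ws ! (k - 1 - 1) = replicate p1 StepE @ replicate v StepF @ [StepN] @ replicate z StepF"
    using LR(1)[OF j0n] Lj Rj jk by simp
  have sgj: "int (sg j0) = int j0 + 1" using yeq[OF j0n] i0_prop j0_prop neq by simp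
  have ej: "int p1 + int v + 1 + int z = int k - 1" using xeq[OF j0n] wj sgj jk by simp
  have ij: "int j0 = int k - 1" using jk by simp
  define a where "a i = int (lead StepE (ws ! (i - 1)))" for i
  define b where "b = int u"
  define \<beta> where "\<beta> = int v"
  have ak: "a k = int p" unfolding a_def wk using lead_E_S by simp
  have akm: "a (k - 1) = int p1" unfolding a_def using wj lead_E_N by simp
  have ordi: "\<And>i. i \<in> {1..n} \<Longrightarrow> i \<noteq> k - 1 \<Longrightarrow> i \<noteq> k \<Longrightarrow>
      ws ! (i - 1) = replicate (nat (a i)) StepE @ replicate (nat (int i - 1 - a i)) StepF \<and> 0 \<le> a i \<and> a i \<le> int i - 1"
  proof -
    fix i assume i: "i \<in> {1..n}" "i \<noteq> k - 1" "i \<noteq> k"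
    have i': "i \<in> {1..n}" "i \<noteq> i0" "i \<noteq> j0" using i jk unfolding k_def by auto
    obtain p' r' where w: "ws ! (i - 1) = replicate p' StepE @ replicate r' StepF" and e: "int p' + int r' = int i - 1"
      using ord_geom[OF i'] by metis
    have "a i = int p'" unfolding a_def w using lead_E_ord by simp
    then show "ws ! (i - 1) = replicate (nat (a i)) StepE @ replicate (nat (int i - 1 - a i)) StepF \<and> 0 \<le> a i \<and> a i \<le> int i - 1"
      using w e by (simp add: nat_eq_iff)
  qed
  have lt1: "a (k - 1) < a k"
  proof (rule ccontr)
    assume "\<not> a (k - 1) < a k"
    then have "p \<le> p1" using ak akm by simp
    then have "(int p, int i0 - 1) \<in> {(x, y). y = int j0 \<and> 0 \<le> x \<and> x \<le> int p1}" using ij k_def by simp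
    then have "(int p, int i0 - 1) \<in> left_verts (0, int j0) (ws ! (j0 - 1))" unfolding lvj .
    moreover have "i0 \<noteq> j0" by (rule neq)
    ultimately show False using W_LD[OF i0n j0n] P1 by blast
  qed
  have lt2: "a (k - 1) + \<beta> < a k + b"
  proof (rule ccontr)
    assume "\<not> a (k - 1) + \<beta> < a k + b"
    then have "int p + int u \<le> int p1 + int v" using ak akm unfolding b_def \<beta>_def by simp
    moreover have "int p1 \<le> int p + int u" using lt1 ak akm by simp
    ultimately have "(int p + int u, int i0 - 1) \<in> {(x, y). y = int j0 \<and> int p1 \<le> x \<and> x \<le> int p1 + int v}"
      using ij k_def by simp
    then have "(int p + int u, int i0 - 1) \<in> right_verts (0, int j0) (ws ! (j0 - 1))" using rvj by blast
    moreover have "i0 \<noteq> j0" by (rule neq)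
    ultimately show False using W_RD[OF i0n j0n] JR by blast
  qed
  have T: "(k, a, b, \<beta>) \<in> Tab n"
    unfolding Tab_def
  proof (intro CollectI case_prodI conjI)
    show "2 \<le> k" using jk by simp
    show "k \<le> n" using kn by simp
    show "\<forall>i\<in>{1..n}. i \<noteq> k - 1 \<and> i \<noteq> k \<longrightarrow> 0 \<le> a i \<and> a i \<le> int i - 1" using ordi by blast
    show "0 \<le> a (k - 1)" using akm by simp
    show "a (k - 1) < a k" by (rule lt1)
    show "0 \<le> b" unfolding b_def by simp
    show "a k + b \<le> int k - 2" using ak ek unfolding b_def by simp
    show "0 \<le> \<beta>" unfolding \<beta>_def by simp
    show "a (k - 1) + \<beta> < a k + b" by (rule lt2)
  qed
  have "ws = Psi n k a b \<beta>"
  proof (rule nth_equalityI)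
    show "length ws = length (Psi n k a b \<beta>)" using W_len by simp
  next
    fix j assume j: "j < length ws"
    let ?i = "Suc j"
    have i: "?i \<in> {1..n}" using j W_len by simp
    have "Psi n k a b \<beta> ! j = pth k a b \<beta> ?i" using Psi_nth[OF i] by simp
    moreover have "ws ! j = pth k a b \<beta> ?i"
    proof -
      consider "?i = k - 1" | "?i = k" | "?i \<noteq> k - 1" "?i \<noteq> k" by blast
      then show ?thesis
      proof cases
        case 1
        have "nat (int k - 2 - a ?i - \<beta>) = z" using ej akm 1 unfolding \<beta>_def by simp
        moreover have "j = k - 1 - 1" using 1 by simp
        ultimately show ?thesis unfolding pth_def using 1 wj akm unfolding \<beta>_def by simp
      next
        case 2
        have "nat (int k - 2 - a ?i - b) = r" using ek ak 2 unfolding b_def by simp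
        moreover have "j = k - 1" using 2 by simp
        ultimately show ?thesis unfolding pth_def using 2 kne wk ak unfolding b_def by simp
      next
        case 3
        then show ?thesis unfolding pth_def using ordi[OF i 3] by simp
      qed
    qed
    ultimately show "ws ! j = Psi n k a b \<beta> ! j" by simp
  qed
  then show ?thesis using T by blast
qed

end


lemma MM_Psi: "ws \<in> MM n 1 \<Longrightarrow> \<exists>k a b \<beta>. (k, a, b, \<beta>) \<in> Tab n \<and> ws = Psi n k a b \<beta>"
  by (rule MM_Psi_ctx)

theorem theorem3:
  fixes n :: nat
  shows "bij_betw (Phi n) (NN1 n) (MM n 1)"
proof -
  have T1': "\<And>x. x \<in> NN1 n \<Longrightarrow> (kidx n (fst x), ainv n (fst x), cval n (fst x), snd x + ell n (fst x)) \<in> Tab n"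
    using T1 by (metis prod.collapse)
  have PP: "\<And>x. Phi n x = Psi n (kidx n (fst x)) (ainv n (fst x)) (cval n (fst x)) (snd x + ell n (fst x))"
    using Phi_Psi by (metis prod.collapse)
  have inj: "inj_on (Phi n) (NN1 n)"
  proof (rule inj_onI)
    fix x y assume x: "x \<in> NN1 n" and y: "y \<in> NN1 n" and e: "Phi n x = Phi n y"
    obtain A E where xx: "x = (A, E)" by (cases x)
    obtain A' E' where yy: "y = (A', E')" by (cases y)
    have "kidx n A = kidx n A' \<and> (\<forall>i\<in>{1..n}. ainv n A i = ainv n A' i) \<and> cval n A = cval n A' \<and>
        E + ell n A = E' + ell n A'"
      using Psi_inj[OF T1'[OF x] T1'[OF y]] e PP xx yy by simp
    then have "A = A' \<and> E = E'" using T2 x y xx yy by blast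
    then show "x = y" using xx yy by simp
  qed
  have sub: "Phi n ` NN1 n \<subseteq> MM n 1"
  proof
    fix z assume "z \<in> Phi n ` NN1 n"
    then obtain x where x: "x \<in> NN1 n" "z = Phi n x" by blast
    show "z \<in> MM n 1" using Psi_MM[OF T1'[OF x(1)]] PP x(2) by simp
  qed
  have sup: "MM n 1 \<subseteq> Phi n ` NN1 n"
  proof
    fix ws assume "ws \<in> MM n 1"
    then obtain k a b \<beta> where t: "(k, a, b, \<beta>) \<in> Tab n" and ws: "ws = Psi n k a b \<beta>"
      using MM_Psi by blast
    obtain A E where AE: "(A, E) \<in> NN1 n" "kidx n A = k" "\<forall>i\<in>{1..n}. ainv n A i = a i"
      "cval n A = b" "E + ell n A = \<beta>"
      using T3[OF t] by blast
    have "Phi n (A, E) = Psi n k (ainv n A) b \<beta>" using Phi_Psi AE by simp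
    also have "... = Psi n k a b \<beta>" using Psi_cong AE(3) by blast
    finally have "ws = Phi n (A, E)" using ws by simp
    then show "ws \<in> Phi n ` NN1 n" using AE(1) by blast
  qed
  show ?thesis unfolding bij_betw_def using inj sub sup by blast
qed


end
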